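(* The set $\{[L,l] : (L,l)\text{ a pointed image-finite labelled transition system}\}$ is a subset of $\mathbb{X}=\max(\mathbb{D})$ and is dense in $(\mathbb{X},\tau_{\mathbb{X}})$.
   Context: Fix a finite set $\mathrm{Act}$ of events. A mixed transition system is $M=(\Sigma,R^a,R^c)$ with $R^a,R^c\subseteq\Sigma\times\mathrm{Act}\times\Sigma$; it is a modal transition system if $R^a\subseteq R^c$; a labelled transition system $(\Sigma,R)$ is identified with $(\Sigma,R,R)$. $M$ is image-finite if for all $s,\alpha$ and $m\in\{a,c\}$ the set $\{s' : (s,\alpha,s')\in R^m\}$ is finite; pointed systems have a designated state. A relation $Q\subseteq\Sigma\times\Sigma$ is a refinement within $M$ if $(s,t)\in Q$ implies, for all $\alpha$: (i) whenever $(s,\alpha,s')\in R^a$ there is $(t,\alpha,t')\in R^a$ with $(s',t')\in Q$; (ii) whenever $(t,\alpha,t')\in R^c$ there is $(s,\alpha,s')\in R^c$ with $(s',t')\in Q$. For pointed systems, $(N,j)$ refines $(M,i)$ if some refinement within the disjoint union contains $(i,j)$; refinement-equivalent means both directions. Domain theory: $K(D)$ denotes compact elements of a dcpo; bifinite (SFP) domains are algebraic dcpos where, for finite $F\subseteq K(D)$, iterated minimal-upper-bound sets are finite and in $K(D)$ and every upper bound of $F$ is above a minimal upper bound. Scott topology: sets $U={\uparrow}(U\cap K(D))$; Lawson topology generated by ${\uparrow}k\setminus{\uparrow}l$, $k,l\in K(D)$. Mixed powerdomain $\mathcal{M}(D)$: pairs $(L,U)$, $L$ Scott-closed, $U$ Lawson-closed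 upper, $L={\downarrow}(L\cap U)$, ordered by $L\subseteq L'$ and $U'\subseteq U$. $\mathbb{D}$ is the initial solution over bifinite domains of $\mathbb{D}\cong\prod_{\alpha\in\mathrm{Act}}\mathcal{M}(\mathbb{D})$, $d=((L^d_\alpha,U^d_\alpha))_\alpha$, viewed as the mixed transition system with $(d,\alpha,d')\in\mathbb{R}^a$ iff $d'\in L^d_\alpha$ and $(d,\alpha,d')\in\mathbb{R}^c$ iff $d'\in U^d_\alpha$; its order equals the greatest refinement relation within this system. $\mathbb{X}=\max(\mathbb{D})$, $\tau_{\mathbb{X}}=\{U\cap\mathbb{X} : U\text{ Scott-open}\}$. For each image-finite pointed modal transition system $(M,i)$, $[M,i]$ denotes the unique element of $\mathbb{D}$ such that $(\mathbb{D},[M,i])$ and $(M,i)$ are refinement-equivalent. *)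

theory Defs
  imports Main
begin

type_synonym ('s,'act) mts = "'s set \<times> ('s \<times> 'act \<times> 's) set \<times> ('s \<times> 'act \<times> 's) set"

definition refinement :: "('s,'act) mts \<Rightarrow> ('s \<times> 's) set \<Rightarrow> bool" where
  "refinement M Q \<longleftrightarrow> (case M of (\<Sigma>, Ra, Rc) \<Rightarrow>
     Q \<subseteq> \<Sigma> \<times> \<Sigma> \<and>
     (\<forall>(s,t)\<in>Q. \<forall>\<alpha>.
        (\<forall>s'. (s,\<alpha>,s') \<in> Ra \<longrightarrow> (\<exists>t'. (t,\<alpha>,t') \<in> Ra \<and> (s',t') \<in> Q)) \<and>
        (\<forall>t'. (t,\<alpha>,t') \<in> Rc \<longrightarrow> (\<exists>s'. (s,\<alpha>,s') \<in> Rc \<and> (s',t') \<in> Q))))"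

definition dunion :: "('a,'act) mts \<Rightarrow> ('b,'act) mts \<Rightarrow> ('a + 'b,'act) mts" where
  "dunion M N = (case M of (\<Sigma>1, Ra1, Rc1) \<Rightarrow> case N of (\<Sigma>2, Ra2, Rc2) \<Rightarrow>
     (Inl ` \<Sigma>1 \<union> Inr ` \<Sigma>2,
      (\<lambda>(s,a,t). (Inl s, a, Inl t)) ` Ra1 \<union> (\<lambda>(s,a,t). (Inr s, a, Inr t)) ` Ra2,
      (\<lambda>(s,a,t). (Inl s, a, Inl t)) ` Rc1 \<union> (\<lambda>(s,a,t). (Inr s, a, Inr t)) ` Rc2))"

text \<open>(N,j) refines (M,i)\<close>
definition refines :: "('a,'act) mts \<Rightarrow> 'a \<Rightarrow> ('b,'act) mts \<Rightarrow> 'b \<Rightarrow> bool" where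
  "refines M i N j \<longleftrightarrow> (\<exists>Q. refinement (dunion M N) Q \<and> (Inl i, Inr j) \<in> Q)"

definition ref_equiv :: "('a,'act) mts \<Rightarrow> 'a \<Rightarrow> ('b,'act) mts \<Rightarrow> 'b \<Rightarrow> bool" where
  "ref_equiv M i N j \<longleftrightarrow> refines M i N j \<and> refines N j M i"

definition lts :: "'s set \<Rightarrow> ('s \<times> 'act \<times> 's) set \<Rightarrow> ('s,'act) mts" where
  "lts \<Sigma> R = (\<Sigma>, R, R)"

definition lts_wf :: "'s set \<Rightarrow> ('s \<times> 'act \<times> 's) set \<Rightarrow> bool" where
  "lts_wf \<Sigma> R \<longleftrightarrow> R \<subseteq> \<Sigma> \<times> UNIV \<times> \<Sigma>"

definition image_finite :: "('s,'act) mts \<Rightarrow> bool" where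
  "image_finite M \<longleftrightarrow> (case M of (\<Sigma>, Ra, Rc) \<Rightarrow>
     (\<forall>s \<alpha>. finite {s'. (s,\<alpha>,s') \<in> Ra} \<and> finite {s'. (s,\<alpha>,s') \<in> Rc}))"

definition po_on :: "'d set \<Rightarrow> ('d \<Rightarrow> 'd \<Rightarrow> bool) \<Rightarrow> bool" where
  "po_on D le \<longleftrightarrow> (\<forall>x\<in>D. le x x) \<and> (\<forall>x\<in>D. \<forall>y\<in>D. le x y \<and> le y x \<longrightarrow> x = y)
     \<and> (\<forall>x\<in>D. \<forall>y\<in>D. \<forall>z\<in>D. le x y \<and> le y z \<longrightarrow> le x z)"

definition up :: "'d set \<Rightarrow> ('d \<Rightarrow> 'd \<Rightarrow> bool) \<Rightarrow> 'd set \<Rightarrow> 'd set" where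
  "up D le X = {y\<in>D. \<exists>x\<in>X. le x y}"

definition down :: "'d set \<Rightarrow> ('d \<Rightarrow> 'd \<Rightarrow> bool) \<Rightarrow> 'd set \<Rightarrow> 'd set" where
  "down D le X = {y\<in>D. \<exists>x\<in>X. le y x}"

definition directed :: "'d set \<Rightarrow> ('d \<Rightarrow> 'd \<Rightarrow> bool) \<Rightarrow> 'd set \<Rightarrow> bool" where
  "directed D le S \<longleftrightarrow> S \<subseteq> D \<and> S \<noteq> {} \<and> (\<forall>x\<in>S. \<forall>y\<in>S. \<exists>z\<in>S. le x z \<and> le y z)"

definition upper_bounds :: "'d set \<Rightarrow> ('d \<Rightarrow> 'd \<Rightarrow> bool) \<Rightarrow> 'd set \<Rightarrow> 'd set" where
  "upper_bounds D le S = {u\<in>D. \<forall>x\<in>S. le x u}"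

definition is_lub :: "'d set \<Rightarrow> ('d \<Rightarrow> 'd \<Rightarrow> bool) \<Rightarrow> 'd set \<Rightarrow> 'd \<Rightarrow> bool" where
  "is_lub D le S s \<longleftrightarrow> s \<in> upper_bounds D le S \<and> (\<forall>u\<in>upper_bounds D le S. le s u)"

definition dcpo :: "'d set \<Rightarrow> ('d \<Rightarrow> 'd \<Rightarrow> bool) \<Rightarrow> bool" where
  "dcpo D le \<longleftrightarrow> po_on D le \<and> (\<forall>S. directed D le S \<longrightarrow> (\<exists>s. is_lub D le S s))"

definition compacts :: "'d set \<Rightarrow> ('d \<Rightarrow> 'd \<Rightarrow> bool) \<Rightarrow> 'd set" where
  "compacts D le = {k\<in>D. \<forall>S s. directed D le S \<and> is_lub D le S s \<and> le k s \<longrightarrow> (\<exists>x\<in>S. le k x)}"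

definition algebraic :: "'d set \<Rightarrow> ('d \<Rightarrow> 'd \<Rightarrow> bool) \<Rightarrow> bool" where
  "algebraic D le \<longleftrightarrow> dcpo D le \<and>
     (\<forall>x\<in>D. directed D le {k\<in>compacts D le. le k x} \<and> is_lub D le {k\<in>compacts D le. le k x} x)"

definition mub :: "'d set \<Rightarrow> ('d \<Rightarrow> 'd \<Rightarrow> bool) \<Rightarrow> 'd set \<Rightarrow> 'd set" where
  "mub D le F = {u\<in>upper_bounds D le F. \<forall>v\<in>upper_bounds D le F. le v u \<longrightarrow> v = u}"

definition mub_step :: "'d set \<Rightarrow> ('d \<Rightarrow> 'd \<Rightarrow> bool) \<Rightarrow> 'd set \<Rightarrow> 'd set" where
  "mub_step D le F = \<Union>{mub D le G | G. G \<subseteq> F \<and> finite G}"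

definition mub_closure :: "'d set \<Rightarrow> ('d \<Rightarrow> 'd \<Rightarrow> bool) \<Rightarrow> 'd set \<Rightarrow> 'd set" where
  "mub_closure D le F = (\<Union>n. (mub_step D le ^^ n) F)"

definition bifinite :: "'d set \<Rightarrow> ('d \<Rightarrow> 'd \<Rightarrow> bool) \<Rightarrow> bool" where
  "bifinite D le \<longleftrightarrow> algebraic D le \<and>
     (\<forall>F. finite F \<and> F \<subseteq> compacts D le \<longrightarrow>
        finite (mub_closure D le F) \<and> mub_closure D le F \<subseteq> compacts D le \<and>
        (\<forall>u\<in>upper_bounds D le F. \<exists>m\<in>mub D le F. le m u))"

definition scott_open :: "'d set \<Rightarrow> ('d \<Rightarrow> 'd \<Rightarrow> bool) \<Rightarrow> 'd set \<Rightarrow> bool" where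
  "scott_open D le U \<longleftrightarrow> U \<subseteq> D \<and> U = up D le (U \<inter> compacts D le)"

definition scott_closed :: "'d set \<Rightarrow> ('d \<Rightarrow> 'd \<Rightarrow> bool) \<Rightarrow> 'd set \<Rightarrow> bool" where
  "scott_closed D le C \<longleftrightarrow> C \<subseteq> D \<and> scott_open D le (D - C)"

definition scott_closure :: "'d set \<Rightarrow> ('d \<Rightarrow> 'd \<Rightarrow> bool) \<Rightarrow> 'd set \<Rightarrow> 'd set" where
  "scott_closure D le X = \<Inter>{C. scott_closed D le C \<and> X \<subseteq> C}"

definition lawson_subbasis :: "'d set \<Rightarrow> ('d \<Rightarrow> 'd \<Rightarrow> bool) \<Rightarrow> 'd set set" where
  "lawson_subbasis D le = {up D le {k} - up D le {l} | k l. k \<in> compacts D le \<and> l \<in> compacts D le}"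

definition lawson_open :: "'d set \<Rightarrow> ('d \<Rightarrow> 'd \<Rightarrow> bool) \<Rightarrow> 'd set \<Rightarrow> bool" where
  "lawson_open D le U \<longleftrightarrow> U \<subseteq> D \<and>
     (\<forall>x\<in>U. \<exists>F. finite F \<and> F \<subseteq> lawson_subbasis D le \<and> x \<in> D \<inter> \<Inter>F \<and> D \<inter> \<Inter>F \<subseteq> U)"

definition lawson_closed :: "'d set \<Rightarrow> ('d \<Rightarrow> 'd \<Rightarrow> bool) \<Rightarrow> 'd set \<Rightarrow> bool" where
  "lawson_closed D le C \<longleftrightarrow> C \<subseteq> D \<and> lawson_open D le (D - C)"

definition upper_set :: "'d set \<Rightarrow> ('d \<Rightarrow> 'd \<Rightarrow> bool) \<Rightarrow> 'd set \<Rightarrow> bool" where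
  "upper_set D le U \<longleftrightarrow> U \<subseteq> D \<and> up D le U = U"

definition mixed_pd :: "'d set \<Rightarrow> ('d \<Rightarrow> 'd \<Rightarrow> bool) \<Rightarrow> ('d set \<times> 'd set) set" where
  "mixed_pd D le = {(L,U). scott_closed D le L \<and> lawson_closed D le U \<and> upper_set D le U
                          \<and> L = down D le (L \<inter> U)}"

definition scott_continuous :: "'d set \<Rightarrow> ('d \<Rightarrow> 'd \<Rightarrow> bool) \<Rightarrow> ('d \<Rightarrow> 'd) \<Rightarrow> bool" where
  "scott_continuous D le g \<longleftrightarrow> g ` D \<subseteq> D \<and> (\<forall>x\<in>D. \<forall>y\<in>D. le x y \<longrightarrow> le (g x) (g y)) \<and>
     (\<forall>S s. directed D le S \<and> is_lub D le S s \<longrightarrow> is_lub D le (g ` S) (g s))"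

definition mixed_map :: "'d set \<Rightarrow> ('d \<Rightarrow> 'd \<Rightarrow> bool) \<Rightarrow> ('d \<Rightarrow> 'd) \<Rightarrow> 'd set \<times> 'd set \<Rightarrow> 'd set \<times> 'd set" where
  "mixed_map D le g p = (scott_closure D le (g ` fst p), up D le (g ` snd p))"

definition Phi :: "'d set \<Rightarrow> ('d \<Rightarrow> 'd \<Rightarrow> bool) \<Rightarrow> ('d \<Rightarrow> ('act \<Rightarrow> 'd set \<times> 'd set))
                   \<Rightarrow> ('d \<Rightarrow> 'd) \<Rightarrow> 'd \<Rightarrow> 'd" where
  "Phi D le \<iota> g x = inv_into D \<iota> (\<lambda>\<alpha>. mixed_map D le g (\<iota> x \<alpha>))"

text \<open>(D, le, \<iota>) is the initial solution over bifinite domains of D \<cong> \<Prod>\<alpha>\<in>Act. M(D):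
  D bifinite, \<iota> an order isomorphism onto the product, and initiality expressed as
  the minimal invariant property: the identity is the least fixed point of Phi among
  Scott-continuous endomaps of D.\<close>
definition initial_solution :: "'d set \<Rightarrow> ('d \<Rightarrow> 'd \<Rightarrow> bool) \<Rightarrow> ('d \<Rightarrow> ('act \<Rightarrow> 'd set \<times> 'd set)) \<Rightarrow> bool" where
  "initial_solution D le \<iota> \<longleftrightarrow>
     bifinite D le \<and>
     bij_betw \<iota> D {p. \<forall>\<alpha>. p \<alpha> \<in> mixed_pd D le} \<and>
     (\<forall>x\<in>D. \<forall>y\<in>D. le x y \<longleftrightarrow>
         (\<forall>\<alpha>. fst (\<iota> x \<alpha>) \<subseteq> fst (\<iota> y \<alpha>) \<and> snd (\<iota> y \<alpha>) \<subseteq> snd (\<iota> x \<alpha>))) \<and>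
     (\<forall>g. scott_continuous D le g \<and> (\<forall>x\<in>D. Phi D le \<iota> g x = g x) \<longrightarrow> (\<forall>x\<in>D. le x (g x)))"

definition dsys :: "'d set \<Rightarrow> ('d \<Rightarrow> ('act \<Rightarrow> 'd set \<times> 'd set)) \<Rightarrow> ('d,'act) mts" where
  "dsys D \<iota> = (D, {(d,\<alpha>,d'). d \<in> D \<and> d' \<in> fst (\<iota> d \<alpha>)}, {(d,\<alpha>,d'). d \<in> D \<and> d' \<in> snd (\<iota> d \<alpha>)})"

text \<open>[M,i]: the unique element of D refinement-equivalent to (M,i).\<close>
definition bracket :: "'d set \<Rightarrow> ('d \<Rightarrow> ('act \<Rightarrow> 'd set \<times> 'd set)) \<Rightarrow> ('s,'act) mts \<Rightarrow> 's \<Rightarrow> 'd" where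
  "bracket D \<iota> M i = (THE d. d \<in> D \<and> ref_equiv (dsys D \<iota>) d M i)"

definition maximals :: "'d set \<Rightarrow> ('d \<Rightarrow> 'd \<Rightarrow> bool) \<Rightarrow> 'd set" where
  "maximals D le = {x\<in>D. \<forall>y\<in>D. le x y \<longrightarrow> y = x}"

end

theory Submission
  imports Defs "HOL-Library.Countable_Set"
begin

locale isol =
  fixes D :: "'d set" and le :: "'d \<Rightarrow> 'd \<Rightarrow> bool"
    and \<iota> :: "'d \<Rightarrow> ('act::finite \<Rightarrow> 'd set \<times> 'd set)"
  assumes isol: "initial_solution D le \<iota>"
begin

abbreviation "K \<equiv> compacts D le"
abbreviation "P \<equiv> {p. \<forall>\<alpha>. p \<alpha> \<in> mixed_pd D le}"
definition "Lf x \<alpha> = fst (\<iota> x \<alpha>)"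
definition "Uf x \<alpha> = snd (\<iota> x \<alpha>)"
definition "j p = inv_into D \<iota> p"

lemma isol_parts: "bifinite D le" "bij_betw \<iota> D P"
  "\<forall>x\<in>D. \<forall>y\<in>D. le x y \<longleftrightarrow>
         (\<forall>\<alpha>. fst (\<iota> x \<alpha>) \<subseteq> fst (\<iota> y \<alpha>) \<and> snd (\<iota> y \<alpha>) \<subseteq> snd (\<iota> x \<alpha>))"
  "\<forall>g. scott_continuous D le g \<and> (\<forall>x\<in>D. Phi D le \<iota> g x = g x) \<longrightarrow> (\<forall>x\<in>D. le x (g x))"
  using isol unfolding initial_solution_def by blast+
lemma bif: "bifinite D le" by (rule isol_parts(1))
lemma alg: "algebraic D le" using bif unfolding bifinite_def by (elim conjE)
lemma dcpo: "dcpo D le" using alg unfolding algebraic_def by (elim conjE)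
lemma po: "po_on D le" using dcpo unfolding dcpo_def by (elim conjE)
lemma refl: "x \<in> D \<Longrightarrow> le x x" using po unfolding po_on_def by blast
lemma antisym: "x \<in> D \<Longrightarrow> y \<in> D \<Longrightarrow> le x y \<Longrightarrow> le y x \<Longrightarrow> x = y"
proof -
  assume a: "x \<in> D" "y \<in> D" "le x y" "le y x"
  have "\<forall>x\<in>D. \<forall>y\<in>D. le x y \<and> le y x \<longrightarrow> x = y" using po unfolding po_on_def by blast
  then show ?thesis using a by blast
qed
lemma trans: "x \<in> D \<Longrightarrow> y \<in> D \<Longrightarrow> z \<in> D \<Longrightarrow> le x y \<Longrightarrow> le y z \<Longrightarrow> le x z"
proof -
  assume a: "x \<in> D" "y \<in> D" "z \<in> D" "le x y" "le y z"
  have "\<forall>x\<in>D. \<forall>y\<in>D. \<forall>z\<in>D. le x y \<and> le y z \<longrightarrow> le x z" using po unfolding po_on_def by (elim conjE)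
  then show ?thesis using a by blast
qed
lemma bij: "bij_betw \<iota> D P" by (rule isol_parts(2))
lemma ord: "x \<in> D \<Longrightarrow> y \<in> D \<Longrightarrow> le x y \<longleftrightarrow> (\<forall>\<alpha>. Lf x \<alpha> \<subseteq> Lf y \<alpha> \<and> Uf y \<alpha> \<subseteq> Uf x \<alpha>)"
  using isol_parts(3) unfolding Lf_def Uf_def by simp
lemma minv: "scott_continuous D le g \<Longrightarrow> (\<And>x. x\<in>D \<Longrightarrow> Phi D le \<iota> g x = g x) \<Longrightarrow> x \<in> D \<Longrightarrow> le x (g x)"
  using isol_parts(4) by blast

lemma iota_P: "x \<in> D \<Longrightarrow> \<iota> x \<in> P" using bij unfolding bij_betw_def by auto
lemma j_D: "p \<in> P \<Longrightarrow> j p \<in> D"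
  using bij unfolding bij_betw_def j_def by (metis inv_into_into)
lemma iota_j: "p \<in> P \<Longrightarrow> \<iota> (j p) = p"
  using bij unfolding bij_betw_def j_def by (simp add: f_inv_into_f)
lemma j_iota: "x \<in> D \<Longrightarrow> j (\<iota> x) = x"
  using bij unfolding bij_betw_def j_def by (simp add: inv_into_f_f)
lemma Lf_j: "p \<in> P \<Longrightarrow> Lf (j p) \<alpha> = fst (p \<alpha>)" by (simp add: Lf_def iota_j)
lemma Uf_j: "p \<in> P \<Longrightarrow> Uf (j p) \<alpha> = snd (p \<alpha>)" by (simp add: Uf_def iota_j)
lemma iota_eq: "x \<in> D \<Longrightarrow> y \<in> D \<Longrightarrow> (\<And>\<alpha>. Lf x \<alpha> = Lf y \<alpha>) \<Longrightarrow> (\<And>\<alpha>. Uf x \<alpha> = Uf y \<alpha>) \<Longrightarrow> x = y"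
proof -
  assume a: "x \<in> D" "y \<in> D" "\<And>\<alpha>. Lf x \<alpha> = Lf y \<alpha>" "\<And>\<alpha>. Uf x \<alpha> = Uf y \<alpha>"
  have "le x y" "le y x" using a by (simp_all add: ord)
  then show ?thesis using antisym[OF a(1,2)] by blast
qed

lemma mpd: "x \<in> D \<Longrightarrow> (Lf x \<alpha>, Uf x \<alpha>) \<in> mixed_pd D le"
  using iota_P unfolding Lf_def Uf_def by auto
lemma L_sc: "x \<in> D \<Longrightarrow> scott_closed D le (Lf x \<alpha>)" using mpd[of x \<alpha>] unfolding mixed_pd_def by auto
lemma U_lc: "x \<in> D \<Longrightarrow> lawson_closed D le (Uf x \<alpha>)" using mpd[of x \<alpha>] unfolding mixed_pd_def by auto
lemma U_up: "x \<in> D \<Longrightarrow> upper_set D le (Uf x \<alpha>)" using mpd[of x \<alpha>] unfolding mixed_pd_def by auto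
lemma L_eq: "x \<in> D \<Longrightarrow> Lf x \<alpha> = down D le (Lf x \<alpha> \<inter> Uf x \<alpha>)" using mpd[of x \<alpha>] unfolding mixed_pd_def by auto
lemma U_sub: "x \<in> D \<Longrightarrow> Uf x \<alpha> \<subseteq> D" using U_up unfolding upper_set_def by auto
lemma L_sub: "x \<in> D \<Longrightarrow> Lf x \<alpha> \<subseteq> D" using L_sc unfolding scott_closed_def by auto
lemma U_upD: "x \<in> D \<Longrightarrow> u \<in> Uf x \<alpha> \<Longrightarrow> v \<in> D \<Longrightarrow> le u v \<Longrightarrow> v \<in> Uf x \<alpha>"
  using U_up[of x \<alpha>] unfolding upper_set_def up_def by blast
lemma L_decomp: "x \<in> D \<Longrightarrow> l \<in> Lf x \<alpha> \<Longrightarrow> \<exists>l'. l' \<in> Lf x \<alpha> \<and> l' \<in> Uf x \<alpha> \<and> le l l'"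
  using L_eq[of x \<alpha>] unfolding down_def by blast

lemma compactsD: "k \<in> K \<Longrightarrow> directed D le S \<Longrightarrow> is_lub D le S s \<Longrightarrow> le k s \<Longrightarrow> \<exists>x\<in>S. le k x"
  unfolding compacts_def by blast
lemma compacts_sub: "K \<subseteq> D" unfolding compacts_def by auto
lemma alg_dir: "x \<in> D \<Longrightarrow> directed D le {k\<in>K. le k x}" using alg unfolding algebraic_def by auto
lemma alg_lub: "x \<in> D \<Longrightarrow> is_lub D le {k\<in>K. le k x} x" using alg unfolding algebraic_def by auto
lemma lub_ex: "directed D le S \<Longrightarrow> \<exists>s. is_lub D le S s" using dcpo unfolding dcpo_def by auto
lemma lub_D: "is_lub D le S s \<Longrightarrow> s \<in> D" unfolding is_lub_def upper_bounds_def by auto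
lemma lub_ub: "is_lub D le S s \<Longrightarrow> x \<in> S \<Longrightarrow> le x s" unfolding is_lub_def upper_bounds_def by auto
lemma lub_least: "is_lub D le S s \<Longrightarrow> u \<in> D \<Longrightarrow> (\<And>x. x \<in> S \<Longrightarrow> le x u) \<Longrightarrow> le s u"
  unfolding is_lub_def upper_bounds_def by auto
lemma lub_unique: "is_lub D le S s \<Longrightarrow> is_lub D le S t \<Longrightarrow> s = t"
proof -
  assume a: "is_lub D le S s" "is_lub D le S t"
  have "le s t" by (rule lub_least[OF a(1) lub_D[OF a(2)]]) (rule lub_ub[OF a(2)])
  moreover have "le t s" by (rule lub_least[OF a(2) lub_D[OF a(1)]]) (rule lub_ub[OF a(1)])
  ultimately show ?thesis using antisym[OF lub_D[OF a(1)] lub_D[OF a(2)]] by blast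
qed
lemma dirD: "directed D le S \<Longrightarrow> x \<in> S \<Longrightarrow> y \<in> S \<Longrightarrow> \<exists>z\<in>S. le x z \<and> le y z"
  unfolding directed_def by auto
lemma dir_sub: "directed D le S \<Longrightarrow> S \<subseteq> D" unfolding directed_def by auto
lemma dir_ne: "directed D le S \<Longrightarrow> S \<noteq> {}" unfolding directed_def by auto

lemma below_compact: "x \<in> D \<Longrightarrow> y \<in> D \<Longrightarrow> \<not> le x y \<Longrightarrow> \<exists>k\<in>K. le k x \<and> \<not> le k y"
proof (rule ccontr)
  assume a: "x \<in> D" "y \<in> D" "\<not> le x y" "\<not> (\<exists>k\<in>K. le k x \<and> \<not> le k y)"
  then have "le x y" using lub_least[OF alg_lub[OF a(1)] a(2)] by blast
  then show False using a by auto
qed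

lemma le_via_compacts: "x \<in> D \<Longrightarrow> y \<in> D \<Longrightarrow> (\<And>k. k \<in> K \<Longrightarrow> le k x \<Longrightarrow> le k y) \<Longrightarrow> le x y"
  using below_compact by blast

lemma finite_dir_common:
  assumes "directed D le S" "finite I" "\<And>i. i \<in> I \<Longrightarrow> \<exists>x\<in>S. Q i x"
    and "\<And>i x y. i \<in> I \<Longrightarrow> x \<in> S \<Longrightarrow> y \<in> S \<Longrightarrow> le x y \<Longrightarrow> Q i x \<Longrightarrow> Q i y"
  shows "\<exists>x\<in>S. \<forall>i\<in>I. Q i x"
  using assms(2,3,4)
proof (induction I rule: finite_induct)
  case empty then show ?case using dir_ne[OF assms(1)] by auto
next
  case (insert i I)
  then obtain x where x: "x \<in> S" "\<forall>i\<in>I. Q i x" by auto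
  obtain y where y: "y \<in> S" "Q i y" using insert.prems(1)[of i] by auto
  obtain z where "z \<in> S" "le x z" "le y z" using dirD[OF assms(1) x(1) y(1)] by auto
  then have "\<forall>i'\<in>insert i I. Q i' z" using insert.prems(2)[of i y z] insert.prems(2)[of _ x z] x y by auto
  then show ?case using \<open>z \<in> S\<close> by blast
qed

end

context isol begin

lemma upI: "y \<in> D \<Longrightarrow> x \<in> X \<Longrightarrow> le x y \<Longrightarrow> y \<in> up D le X" unfolding up_def by blast
lemma upE: "y \<in> up D le X \<Longrightarrow> (\<And>x. y \<in> D \<Longrightarrow> x \<in> X \<Longrightarrow> le x y \<Longrightarrow> thesis) \<Longrightarrow> thesis" unfolding up_def by blast
lemma downI: "y \<in> D \<Longrightarrow> x \<in> X \<Longrightarrow> le y x \<Longrightarrow> y \<in> down D le X" unfolding down_def by blast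
lemma downE: "y \<in> down D le X \<Longrightarrow> (\<And>x. y \<in> D \<Longrightarrow> x \<in> X \<Longrightarrow> le y x \<Longrightarrow> thesis) \<Longrightarrow> thesis" unfolding down_def by blast
lemma up_sub: "up D le X \<subseteq> D" unfolding up_def by blast
lemma down_sub: "down D le X \<subseteq> D" unfolding down_def by blast
lemma up_self: "X \<subseteq> D \<Longrightarrow> X \<subseteq> up D le X" using refl unfolding up_def by blast
lemma down_self: "X \<subseteq> D \<Longrightarrow> X \<subseteq> down D le X" using refl unfolding down_def by blast

lemma so_iff: "scott_open D le V \<longleftrightarrow> V \<subseteq> D \<and> V = up D le (V \<inter> K)" unfolding scott_open_def by simp

lemma compact_below: "x \<in> D \<Longrightarrow> \<exists>k\<in>K. le k x"
  using alg_dir[of x] dir_ne by blast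

lemma so_D: "scott_open D le D"
  unfolding so_iff
proof
  show "D = up D le (D \<inter> K)"
  proof
    show "D \<subseteq> up D le (D \<inter> K)"
    proof
      fix x assume "x \<in> D"
      then obtain k where "k \<in> K" "le k x" using compact_below by blast
      then show "x \<in> up D le (D \<inter> K)" using \<open>x \<in> D\<close> compacts_sub by (intro upI) auto
    qed
  qed (rule up_sub)
qed simp

lemma sc_empty: "scott_closed D le {}" unfolding scott_closed_def using so_D by simp
lemma sc_D: "scott_closed D le D" unfolding scott_closed_def so_iff up_def by simp
lemma lc_D: "lawson_closed D le D" unfolding lawson_closed_def lawson_open_def by simp
lemma lc_empty: "lawson_closed D le {}" unfolding lawson_closed_def lawson_open_def
  by (auto intro!: exI[of _ "{}"])
lemma upper_D: "upper_set D le D" unfolding upper_set_def using up_sub up_self by blast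
lemma upper_empty: "upper_set D le {}" unfolding upper_set_def up_def by simp
lemma down_D: "down D le D = D" using down_sub down_self by blast

lemma P_bot: "(\<lambda>\<alpha>. ({}, D)) \<in> P" unfolding mixed_pd_def
  using sc_empty lc_D upper_D unfolding down_def by simp
lemma P_nil: "(\<lambda>\<alpha>. ({}, {})) \<in> P" unfolding mixed_pd_def
  using sc_empty lc_empty upper_empty unfolding down_def by simp
lemma P_top: "(\<lambda>\<alpha>. (D, D)) \<in> P" unfolding mixed_pd_def
  using sc_D lc_D upper_D down_D by simp

definition "bt = j (\<lambda>\<alpha>. ({}, D))"
lemma bt_D: "bt \<in> D" unfolding bt_def using j_D[OF P_bot] .
lemma bt_le: assumes "x \<in> D" shows "le bt x"
proof -
  have "\<forall>\<alpha>. Lf bt \<alpha> \<subseteq> Lf x \<alpha> \<and> Uf x \<alpha> \<subseteq> Uf bt \<alpha>"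
    unfolding bt_def Lf_j[OF P_bot] Uf_j[OF P_bot] using U_sub[OF assms] by simp
  then show ?thesis using ord[OF bt_D assms] by blast
qed
lemma bt_K: "bt \<in> K"
  unfolding compacts_def using bt_D bt_le dir_ne dir_sub by blast

lemma D_ne: "D \<noteq> {}" using bt_D by blast

lemma no_top: assumes "x \<in> D" shows "\<exists>l\<in>K. \<not> le l x"
proof -
  let ?n = "j (\<lambda>\<alpha>. ({}, {}))" and ?t = "j (\<lambda>\<alpha>. (D, D))"
  have nD: "?n \<in> D" and tD: "?t \<in> D" using j_D P_nil P_top by auto
  have "\<not> (le ?n x \<and> le ?t x)"
  proof
    assume a: "le ?n x \<and> le ?t x"
    fix \<alpha> :: 'act
    have "Uf x \<alpha> \<subseteq> {}" using a ord[OF nD assms] Uf_j[OF P_nil] by auto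
    moreover have "D \<subseteq> Lf x \<alpha>" using a ord[OF tD assms] Lf_j[OF P_top] by auto
    ultimately show False using L_eq[OF assms, of \<alpha>] D_ne unfolding down_def by auto
  qed
  then obtain y where y: "y \<in> D" "\<not> le y x" using nD tD by blast
  then show ?thesis using below_compact[OF y(1) assms] by blast
qed

lemma sc_sub: "scott_closed D le C \<Longrightarrow> C \<subseteq> D" unfolding scott_closed_def by simp

lemma sc_down: assumes "scott_closed D le C" "x \<in> C" "y \<in> D" "le y x" shows "y \<in> C"
proof (rule ccontr)
  assume "y \<notin> C"
  have eq: "D - C = up D le ((D - C) \<inter> K)" using assms(1) unfolding scott_closed_def so_iff by blast
  have "y \<in> D - C" using \<open>y \<notin> C\<close> assms by blast
  then obtain k where k: "k \<in> (D - C) \<inter> K" "le k y" using eq by (auto elim: upE)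
  have xD: "x \<in> D" using assms sc_sub by blast
  have "le k x" using trans[OF _ assms(3) xD k(2) assms(4)] k compacts_sub by blast
  then have "x \<in> up D le ((D - C) \<inter> K)" using xD k by (intro upI)
  then show False using eq assms(2) by blast
qed

lemma sc_lub: assumes "scott_closed D le C" "directed D le S" "S \<subseteq> C" "is_lub D le S s" shows "s \<in> C"
proof (rule ccontr)
  assume "s \<notin> C"
  have eq: "D - C = up D le ((D - C) \<inter> K)" using assms(1) unfolding scott_closed_def so_iff by blast
  have "s \<in> D - C" using \<open>s \<notin> C\<close> lub_D[OF assms(4)] by blast
  then obtain k where k: "k \<in> (D - C) \<inter> K" "le k s" using eq by (auto elim: upE)
  then obtain x where x: "x \<in> S" "le k x" using compactsD[OF _ assms(2,4)] by blast
  have "x \<in> D" using x dir_sub[OF assms(2)] by blast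
  then have "x \<in> up D le ((D - C) \<inter> K)" using x k by (intro upI)
  then show False using eq assms(3) x by blast
qed

lemma sc_intro:
  assumes sub: "C \<subseteq> D"
    and dn: "\<And>x y. x \<in> C \<Longrightarrow> y \<in> D \<Longrightarrow> le y x \<Longrightarrow> y \<in> C"
    and lb: "\<And>S s. directed D le S \<Longrightarrow> S \<subseteq> C \<Longrightarrow> is_lub D le S s \<Longrightarrow> s \<in> C"
  shows "scott_closed D le C"
  unfolding scott_closed_def so_iff
proof (intro conjI sub)
  show "D - C \<subseteq> D" by blast
  show "D - C = up D le ((D - C) \<inter> K)"
  proof
    show "D - C \<subseteq> up D le ((D - C) \<inter> K)"
    proof
      fix v assume v: "v \<in> D - C"
      have "\<exists>k\<in>K. le k v \<and> k \<notin> C"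
      proof (rule ccontr)
        assume "\<not> ?thesis"
        then have "{k\<in>K. le k v} \<subseteq> C" by blast
        then have "v \<in> C" using lb[OF alg_dir[of v] _ alg_lub[of v]] v by blast
        then show False using v by blast
      qed
      then obtain k where "k \<in> K" "le k v" "k \<notin> C" by blast
      then show "v \<in> up D le ((D - C) \<inter> K)" using v compacts_sub by (intro upI) auto
    qed
  next
    show "up D le ((D - C) \<inter> K) \<subseteq> D - C"
    proof
      fix y assume "y \<in> up D le ((D - C) \<inter> K)"
      then obtain k where k: "y \<in> D" "k \<in> (D - C) \<inter> K" "le k y" by (auto elim: upE)
      show "y \<in> D - C"
      proof
        show "y \<in> D" using k by simp
        show "y \<notin> C" using dn[of y k] k by blast
      qed
    qed
  qed
qed

lemma sc_Inter: assumes "\<C> \<noteq> {}" "\<And>C. C \<in> \<C> \<Longrightarrow> scott_closed D le C" shows "scott_closed D le (\<Inter>\<C>)"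
proof (rule sc_intro)
  show "\<Inter>\<C> \<subseteq> D" using assms sc_sub by blast
  show "\<And>x y. x \<in> \<Inter>\<C> \<Longrightarrow> y \<in> D \<Longrightarrow> le y x \<Longrightarrow> y \<in> \<Inter>\<C>" using assms(2) sc_down by blast
  show "\<And>S s. directed D le S \<Longrightarrow> S \<subseteq> \<Inter>\<C> \<Longrightarrow> is_lub D le S s \<Longrightarrow> s \<in> \<Inter>\<C>"
    using assms(2) sc_lub by blast
qed

lemma cl_sc: "X \<subseteq> D \<Longrightarrow> scott_closed D le (scott_closure D le X)"
  unfolding scott_closure_def using sc_D by (intro sc_Inter) auto
lemma cl_sup: "X \<subseteq> scott_closure D le X" unfolding scott_closure_def by blast
lemma cl_least: "scott_closed D le C \<Longrightarrow> X \<subseteq> C \<Longrightarrow> scott_closure D le X \<subseteq> C"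
  unfolding scott_closure_def by blast
lemma cl_eq: "scott_closed D le C \<Longrightarrow> scott_closure D le C = C"
  using cl_least cl_sup by blast

lemma down_trans: "x \<in> down D le F \<Longrightarrow> F \<subseteq> D \<Longrightarrow> y \<in> D \<Longrightarrow> le y x \<Longrightarrow> y \<in> down D le F"
proof -
  assume a: "x \<in> down D le F" "F \<subseteq> D" "y \<in> D" "le y x"
  from a(1) obtain f where f: "x \<in> D" "f \<in> F" "le x f" by (rule downE)
  have "le y f" using trans[OF a(3) f(1) _ a(4) f(3)] f(2) a(2) by blast
  then show ?thesis using a(3) f(2) unfolding down_def by blast
qed

lemma sc_down_fin: assumes "finite F" "F \<subseteq> D" shows "scott_closed D le (down D le F)"
proof (rule sc_intro)
  show "down D le F \<subseteq> D" by (rule down_sub)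
  show "\<And>x y. x \<in> down D le F \<Longrightarrow> y \<in> D \<Longrightarrow> le y x \<Longrightarrow> y \<in> down D le F"
    using down_trans assms(2) by blast
  fix S s assume S: "directed D le S" "S \<subseteq> down D le F" "is_lub D le S s"
  have SD: "S \<subseteq> D" using dir_sub[OF S(1)] .
  have "\<exists>f\<in>F. \<forall>x\<in>S. le x f"
  proof (rule ccontr)
    assume "\<not> ?thesis"
    then have "\<forall>f\<in>F. \<exists>x\<in>S. \<not> le x f" by blast
    then obtain g where g: "\<And>f. f \<in> F \<Longrightarrow> g f \<in> S" "\<And>f. f \<in> F \<Longrightarrow> \<not> le (g f) f" by metis
    have "\<exists>z\<in>S. \<forall>f\<in>F. le (g f) z"
    proof (rule finite_dir_common[OF S(1) assms(1)])
      fix f assume "f \<in> F" then show "\<exists>z\<in>S. le (g f) z" using g(1) refl SD by blast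
    next
      fix f x y assume "f \<in> F" "x \<in> S" "y \<in> S" "le x y" "le (g f) x"
      then show "le (g f) y" using trans[of "g f" x y] g(1) SD by blast
    qed
    then obtain z where z: "z \<in> S" "\<forall>f\<in>F. le (g f) z" by blast
    obtain f where f: "f \<in> F" "le z f" using S(2) z(1) by (auto elim!: downE)
    have "le (g f) f" using trans[of "g f" z f] g(1)[OF f(1)] z f SD assms(2) by blast
    then show False using g(2)[OF f(1)] by blast
  qed
  then obtain f where f: "f \<in> F" "\<forall>x\<in>S. le x f" by blast
  have "le s f" using lub_least[OF S(3)] f assms(2) by blast
  then show "s \<in> down D le F" using lub_D[OF S(3)] f(1) unfolding down_def by blast
qed

end

context isol begin

lemma subb: "k \<in> K \<Longrightarrow> l \<in> K \<Longrightarrow> up D le {k} - up D le {l} \<in> lawson_subbasis D le"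
  unfolding lawson_subbasis_def by blast

lemma lc_sub: "lawson_closed D le C \<Longrightarrow> C \<subseteq> D" unfolding lawson_closed_def by simp

lemma lc_Inter: assumes "\<C> \<noteq> {}" "\<And>C. C \<in> \<C> \<Longrightarrow> lawson_closed D le C"
  shows "lawson_closed D le (\<Inter>\<C>)"
  unfolding lawson_closed_def lawson_open_def
proof (intro conjI ballI)
  obtain C0 where "C0 \<in> \<C>" using assms(1) by blast
  then have "\<Inter>\<C> \<subseteq> C0" "C0 \<subseteq> D" using lc_sub[OF assms(2)] by auto
  then show "\<Inter>\<C> \<subseteq> D" by (rule subset_trans)
  show "D - \<Inter>\<C> \<subseteq> D" by blast
  fix x assume x: "x \<in> D - \<Inter>\<C>"
  then obtain C where C: "C \<in> \<C>" "x \<in> D - C" by blast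
  have "lawson_open D le (D - C)" using assms(2)[OF C(1)] unfolding lawson_closed_def by blast
  then obtain F where F: "finite F" "F \<subseteq> lawson_subbasis D le" "x \<in> D \<inter> \<Inter>F" "D \<inter> \<Inter>F \<subseteq> D - C"
    using C(2) unfolding lawson_open_def by blast
  have "D - C \<subseteq> D - \<Inter>\<C>" using C(1) by blast
  then have "D \<inter> \<Inter>F \<subseteq> D - \<Inter>\<C>" using F(4) by (rule subset_trans[rotated])
  then show "\<exists>F. finite F \<and> F \<subseteq> lawson_subbasis D le \<and> x \<in> D \<inter> \<Inter> F \<and> D \<inter> \<Inter> F \<subseteq> D - \<Inter> \<C>"
    using F(1-3) by blast
qed

lemma lc_Int: "lawson_closed D le A \<Longrightarrow> lawson_closed D le B \<Longrightarrow> lawson_closed D le (A \<inter> B)"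
  using lc_Inter[of "{A, B}"] by auto

lemma sc_lc: assumes "scott_closed D le C" shows "lawson_closed D le C"
  unfolding lawson_closed_def lawson_open_def
proof (intro conjI ballI)
  show "C \<subseteq> D" using sc_sub[OF assms] .
  show "D - C \<subseteq> D" by blast
  fix x assume x: "x \<in> D - C"
  have eq: "D - C = up D le ((D - C) \<inter> K)" using assms unfolding scott_closed_def so_iff by blast
  obtain k where k: "k \<in> (D - C) \<inter> K" "le k x" using x eq by (auto elim: upE)
  obtain l where l: "l \<in> K" "\<not> le l x" using no_top x by blast
  let ?F = "{up D le {k} - up D le {l}}"
  have "?F \<subseteq> lawson_subbasis D le" using subb k l by blast
  moreover have "x \<in> up D le {k}" using x k by (intro upI) auto
  moreover have "x \<notin> up D le {l}" using l by (auto elim: upE)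
  ultimately have "?F \<subseteq> lawson_subbasis D le" "x \<in> D \<inter> \<Inter>?F" using x by auto
  moreover have "D \<inter> \<Inter>?F \<subseteq> D - C"
  proof
    fix z assume "z \<in> D \<inter> \<Inter>?F"
    then have "z \<in> D" "le k z" unfolding up_def by auto
    then have "z \<in> up D le ((D - C) \<inter> K)" using k by (intro upI)
    then show "z \<in> D - C" using eq by blast
  qed
  ultimately show "\<exists>F. finite F \<and> F \<subseteq> lawson_subbasis D le \<and> x \<in> D \<inter> \<Inter> F \<and> D \<inter> \<Inter> F \<subseteq> D - C"
    by (intro exI[of _ ?F] conjI) auto
qed

lemma so_lo: assumes "scott_open D le V" shows "lawson_open D le V"
proof -
  have V: "V \<subseteq> D" using assms unfolding so_iff by blast
  have "scott_closed D le (D - V)" unfolding scott_closed_def using assms V by (simp add: Diff_Diff_Int Int_absorb1)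
  then have "lawson_closed D le (D - V)" by (rule sc_lc)
  then show ?thesis unfolding lawson_closed_def using V by (simp add: Diff_Diff_Int Int_absorb1)
qed

lemma lo_lc: assumes "lawson_open D le V" shows "lawson_closed D le (D - V)"
proof -
  have V: "V \<subseteq> D" using assms unfolding lawson_open_def by blast
  show ?thesis unfolding lawson_closed_def using assms V by (simp add: Diff_Diff_Int Int_absorb1)
qed

lemma so_upK: assumes "B \<subseteq> K" shows "scott_open D le (up D le B)"
  unfolding so_iff
proof (intro conjI)
  show "up D le B \<subseteq> D" by (rule up_sub)
  show "up D le B = up D le (up D le B \<inter> K)"
  proof
    show "up D le B \<subseteq> up D le (up D le B \<inter> K)"
    proof
      fix y assume "y \<in> up D le B"
      then obtain b where b: "y \<in> D" "b \<in> B" "le b y" by (rule upE)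
      have "b \<in> up D le B" using b assms compacts_sub refl by (intro upI) auto
      then show "y \<in> up D le (up D le B \<inter> K)" using b assms by (intro upI) auto
    qed
    show "up D le (up D le B \<inter> K) \<subseteq> up D le B"
    proof
      fix y assume "y \<in> up D le (up D le B \<inter> K)"
      then obtain c where c: "y \<in> D" "c \<in> up D le B" "le c y" by (auto elim: upE)
      then obtain b where b: "c \<in> D" "b \<in> B" "le b c" by (auto elim: upE)
      have "le b y" using trans[of b c y] b c assms compacts_sub by blast
      then show "y \<in> up D le B" using c b by (intro upI)
    qed
  qed
qed

lemma lc_up_fin: assumes "finite G" "G \<subseteq> D" shows "lawson_closed D le (up D le G)"
  unfolding lawson_closed_def lawson_open_def
proof (intro conjI ballI)
  show "up D le G \<subseteq> D" by (rule up_sub)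
  show "D - up D le G \<subseteq> D" by blast
  fix x assume x: "x \<in> D - up D le G"
  have "\<forall>f\<in>G. \<exists>l\<in>K. le l f \<and> \<not> le l x"
  proof
    fix f assume f: "f \<in> G"
    have "\<not> le f x" using x f assms(2) unfolding up_def by blast
    then show "\<exists>l\<in>K. le l f \<and> \<not> le l x" using below_compact[of f x] f x assms(2) by blast
  qed
  then obtain g where g: "\<And>f. f \<in> G \<Longrightarrow> g f \<in> K \<and> le (g f) f \<and> \<not> le (g f) x" using bchoice by (metis (no_types, lifting))
  let ?F = "(\<lambda>f. up D le {bt} - up D le {g f}) ` G"
  have "finite ?F" using assms by simp
  moreover have "?F \<subseteq> lawson_subbasis D le" using subb bt_K g by blast
  moreover have "x \<in> D \<inter> \<Inter>?F"
  proof -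
    have "x \<in> up D le {bt}" using x bt_le by (intro upI) auto
    moreover have "\<And>f. f \<in> G \<Longrightarrow> x \<notin> up D le {g f}" using g by (auto elim: upE)
    ultimately show ?thesis using x by auto
  qed
  moreover have "D \<inter> \<Inter>?F \<subseteq> D - up D le G"
  proof
    fix z assume z: "z \<in> D \<inter> \<Inter>?F"
    show "z \<in> D - up D le G"
    proof (rule ccontr)
      assume "z \<notin> D - up D le G"
      then obtain f where f: "f \<in> G" "le f z" using z unfolding up_def by blast
      have "le (g f) z" using trans[of "g f" f z] g[OF f(1)] f z assms(2) compacts_sub by blast
      then show False using z f unfolding up_def by blast
    qed
  qed
  ultimately show "\<exists>F. finite F \<and> F \<subseteq> lawson_subbasis D le \<and> x \<in> D \<inter> \<Inter> F \<and> D \<inter> \<Inter> F \<subseteq> D - up D le G"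
    by blast
qed

end

context isol begin

definition fipM :: "'d set set \<Rightarrow> bool" where
  "fipM M \<longleftrightarrow> (\<forall>G. finite G \<and> G \<subseteq> M \<longrightarrow> D \<inter> \<Inter>G \<noteq> {})"

lemma mub_fin: assumes "finite F" "F \<subseteq> K" shows "finite (mub D le F)" "mub D le F \<subseteq> K"
  "\<And>u. u \<in> upper_bounds D le F \<Longrightarrow> \<exists>m\<in>mub D le F. le m u"
proof -
  have b: "finite (mub_closure D le F) \<and> mub_closure D le F \<subseteq> K \<and>
        (\<forall>u\<in>upper_bounds D le F. \<exists>m\<in>mub D le F. le m u)"
    using bif assms unfolding bifinite_def by blast
  have "mub D le F \<subseteq> mub_closure D le F"
  proof
    fix m assume "m \<in> mub D le F"
    then have "m \<in> mub_step D le F" unfolding mub_step_def using assms(1) by blast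
    then have "m \<in> (mub_step D le ^^ 1) F" by simp
    then show "m \<in> mub_closure D le F" unfolding mub_closure_def by blast
  qed
  then show "finite (mub D le F)" "mub D le F \<subseteq> K" using b finite_subset by blast+
  show "\<And>u. u \<in> upper_bounds D le F \<Longrightarrow> \<exists>m\<in>mub D le F. le m u" using b by blast
qed

lemma compact_fip:
  assumes ne: "\<C> \<noteq> {}" and lc: "\<And>C. C \<in> \<C> \<Longrightarrow> lawson_closed D le C"
    and fip: "fipM \<C>"
  shows "D \<inter> \<Inter>\<C> \<noteq> {}"
proof -
  let ?A = "{M. \<C> \<subseteq> M \<and> M \<subseteq> Pow D \<and> fipM M}"
  have CPow: "\<C> \<subseteq> Pow D" using lc lc_sub by blast
  have "\<exists>M\<in>?A. \<forall>X\<in>?A. M \<subseteq> X \<longrightarrow> X = M"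
  proof (rule subset_Zorn_nonempty)
    show "?A \<noteq> {}" using CPow fip by blast
    fix \<B> assume B: "\<B> \<noteq> {}" "subset.chain ?A \<B>"
    have sub: "\<B> \<subseteq> ?A" using B(2) unfolding subset.chain_def by blast
    have "fipM (\<Union>\<B>)" unfolding fipM_def
    proof (intro allI impI)
      fix G assume G: "finite G \<and> G \<subseteq> \<Union>\<B>"
      then obtain M where M: "M \<in> \<B>" "G \<subseteq> M" using finite_subset_Union_chain[OF _ _ B(1) B(2), of G] by blast
      have "M \<in> ?A" using M(1) sub by (rule subsetD[rotated])
      then have "fipM M" by simp
      then have "\<forall>G. finite G \<and> G \<subseteq> M \<longrightarrow> D \<inter> \<Inter>G \<noteq> {}" unfolding fipM_def .
      then show "D \<inter> \<Inter>G \<noteq> {}" using G M(2) by simp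
    qed
    moreover obtain M0 where M0: "M0 \<in> \<B>" using B(1) by blast
    moreover have "\<C> \<subseteq> M0" "\<Union>\<B> \<subseteq> Pow D"
    proof -
      show "\<C> \<subseteq> M0" using subsetD[OF sub M0] by simp
      show "\<Union>\<B> \<subseteq> Pow D"
      proof
        fix X assume "X \<in> \<Union>\<B>"
        then obtain M where "M \<in> \<B>" "X \<in> M" by blast
        then show "X \<in> Pow D" using subsetD[OF sub \<open>M \<in> \<B>\<close>] by blast
      qed
    qed
    ultimately show "\<Union>\<B> \<in> ?A" by blast
  qed
  then obtain M where "M \<in> ?A" and mx0: "\<forall>X\<in>?A. M \<subseteq> X \<longrightarrow> X = M" by (elim bexE)
  then have M: "\<C> \<subseteq> M" "M \<subseteq> Pow D" "fipM M" by simp_all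
  have mx: "X = M" if "\<C> \<subseteq> X" "X \<subseteq> Pow D" "fipM X" "M \<subseteq> X" for X
    using mx0 that by simp
  have ins: "X \<in> M" if "X \<subseteq> D" "fipM (insert X M)" for X
    using mx[of "insert X M"] M that by blast
  have Mne: "D \<inter> \<Inter>G \<noteq> {}" if "finite G" "G \<subseteq> M" for G
  proof -
    have "\<forall>G. finite G \<and> G \<subseteq> M \<longrightarrow> D \<inter> \<Inter>G \<noteq> {}" using M(3) unfolding fipM_def .
    then show ?thesis using that by simp
  qed
  have sup: "B \<in> M" if "A \<in> M" "A \<subseteq> B" "B \<subseteq> D" for A B
  proof (rule ins[OF that(3)])
    show "fipM (insert B M)" unfolding fipM_def
    proof (intro allI impI)
      fix G assume G: "finite G \<and> G \<subseteq> insert B M"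
      let ?G = "insert A (G - {B})"
      have "D \<inter> \<Inter>?G \<noteq> {}" using Mne[of ?G] G that by blast
      moreover have "\<Inter>?G \<subseteq> \<Inter>G" using that(2) by blast
      ultimately show "D \<inter> \<Inter>G \<noteq> {}" by blast
    qed
  qed
  have int: "A \<inter> B \<in> M" if "A \<in> M" "B \<in> M" for A B
  proof (rule ins)
    show "A \<inter> B \<subseteq> D" using that M(2) by blast
    show "fipM (insert (A \<inter> B) M)" unfolding fipM_def
    proof (intro allI impI)
      fix G assume G: "finite G \<and> G \<subseteq> insert (A \<inter> B) M"
      let ?G = "insert A (insert B (G - {A \<inter> B}))"
      have "D \<inter> \<Inter>?G \<noteq> {}" using Mne[of ?G] G that by blast
      moreover have "\<Inter>?G \<subseteq> \<Inter>G" by blast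
      ultimately show "D \<inter> \<Inter>G \<noteq> {}" by blast
    qed
  qed
  obtain C0 where C0: "C0 \<in> \<C>" using ne by blast
  have "C0 \<in> M" using C0 M(1) by blast
  moreover have "C0 \<subseteq> D" using C0 CPow by blast
  ultimately have DM: "D \<in> M" using sup[of C0 D] by simp
  have finint: "D \<inter> \<Inter>G \<in> M" if "finite G" "G \<subseteq> M" for G
    using that
  proof (induction G rule: finite_induct)
    case empty then show ?case using DM by simp
  next
    case (insert X G)
    then have "X \<in> M" "D \<inter> \<Inter>G \<in> M" by simp_all
    then have "X \<inter> (D \<inter> \<Inter>G) \<in> M" by (rule int)
    then show ?case by (simp add: Int_left_commute)
  qed
  have finun: "\<exists>B\<in>\<B>. B \<in> M" if fin: "finite \<B>" and sb: "\<B> \<subseteq> Pow D" and un: "\<Union>\<B> \<in> M" for \<B>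
  proof (rule ccontr)
    assume nB: "\<not> ?thesis"
    have "\<forall>B\<in>\<B>. \<exists>G. finite G \<and> G \<subseteq> M \<and> D \<inter> B \<inter> \<Inter>G = {}"
    proof
      fix B assume B: "B \<in> \<B>"
      have "\<not> fipM (insert B M)"
      proof
        assume "fipM (insert B M)"
        moreover have "B \<subseteq> D" using B sb by blast
        ultimately have "B \<in> M" using ins[of B] by simp
        then show False using nB B by blast
      qed
      then obtain G where G: "finite G" "G \<subseteq> insert B M" "D \<inter> \<Inter>G = {}" unfolding fipM_def by auto
      have "\<Inter>(insert B (G - {B})) \<subseteq> \<Inter>G" by (rule Inter_anti_mono) blast
      then have "D \<inter> B \<inter> \<Inter>(G - {B}) = {}" using G(3) by auto
      then show "\<exists>G. finite G \<and> G \<subseteq> M \<and> D \<inter> B \<inter> \<Inter>G = {}" using G(1,2)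
        by (intro exI[of _ "G - {B}"]) auto
    qed
    then have "\<exists>g. \<forall>B\<in>\<B>. finite (g B) \<and> g B \<subseteq> M \<and> D \<inter> B \<inter> \<Inter>(g B) = {}"
      by (rule bchoice)
    then obtain g where g0: "\<forall>B\<in>\<B>. finite (g B) \<and> g B \<subseteq> M \<and> D \<inter> B \<inter> \<Inter>(g B) = {}" by (elim exE)
    have g: "finite (g B)" "g B \<subseteq> M" "D \<inter> B \<inter> \<Inter>(g B) = {}" if "B \<in> \<B>" for B
      using g0 that by simp_all
    let ?H = "insert (\<Union>\<B>) (\<Union>B\<in>\<B>. g B)"
    have "finite (\<Union>B\<in>\<B>. g B)" using fin g(1) by (rule finite_UN_I)
    then have H1: "finite ?H" by simp
    have "(\<Union>B\<in>\<B>. g B) \<subseteq> M" using g(2) by (rule UN_least)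
    then have H2: "?H \<subseteq> M" using un by simp
    from H1 H2 have "D \<inter> \<Inter>?H \<noteq> {}" by (rule Mne)
    then obtain x where x0: "x \<in> D \<inter> \<Inter>?H" by blast
    then have x: "x \<in> D" "x \<in> \<Union>\<B>" "\<And>B. B \<in> \<B> \<Longrightarrow> x \<in> \<Inter>(g B)" by auto
    then obtain B where B: "B \<in> \<B>" "x \<in> B" by blast
    have "x \<in> D \<inter> B \<inter> \<Inter>(g B)" using x B by simp
    then show False using g(3)[OF B(1)] by simp
  qed
  have compl: "X \<in> M \<or> D - X \<in> M" if "X \<subseteq> D" for X
    using finun[of "{X, D - X}"] that DM by (auto simp: Un_absorb1)
  define S where "S = {k\<in>K. up D le {k} \<in> M}"
  have upbt: "up D le {bt} = D" using up_sub bt_le unfolding up_def by auto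
  have dS: "directed D le S" unfolding directed_def
  proof (intro conjI ballI)
    show "S \<subseteq> D" unfolding S_def using compacts_sub by blast
    show "S \<noteq> {}" unfolding S_def using bt_K upbt DM by auto
    fix k1 k2 assume k: "k1 \<in> S" "k2 \<in> S"
    let ?F = "{k1, k2}"
    have FK: "?F \<subseteq> K" using k unfolding S_def by blast
    have kD: "k1 \<in> D" "k2 \<in> D" using FK compacts_sub by auto
    have "up D le {k1} \<in> M" "up D le {k2} \<in> M" using k unfolding S_def by simp_all
    then have "up D le {k1} \<inter> up D le {k2} \<in> M" by (rule int)
    moreover have "up D le {k1} \<inter> up D le {k2} = (\<Union>m\<in>mub D le ?F. up D le {m})"
    proof
      show "up D le {k1} \<inter> up D le {k2} \<subseteq> (\<Union>m\<in>mub D le ?F. up D le {m})"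
      proof
        fix z assume "z \<in> up D le {k1} \<inter> up D le {k2}"
        then have "z \<in> upper_bounds D le ?F" unfolding up_def upper_bounds_def by auto
        then obtain m where "m \<in> mub D le ?F" "le m z" using mub_fin(3)[OF _ FK] by blast
        moreover have "z \<in> D" using \<open>z \<in> upper_bounds D le ?F\<close> unfolding upper_bounds_def by blast
        ultimately show "z \<in> (\<Union>m\<in>mub D le ?F. up D le {m})" unfolding up_def by blast
      qed
      show "(\<Union>m\<in>mub D le ?F. up D le {m}) \<subseteq> up D le {k1} \<inter> up D le {k2}"
      proof
        fix z assume "z \<in> (\<Union>m\<in>mub D le ?F. up D le {m})"
        then obtain m where m: "m \<in> mub D le ?F" "z \<in> D" "le m z" unfolding up_def by blast
        then have "m \<in> D" "le k1 m" "le k2 m" unfolding mub_def upper_bounds_def by auto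
        then have "le k1 z" "le k2 z" using trans[of k1 m z] trans[of k2 m z] kD m by simp_all
        then show "z \<in> up D le {k1} \<inter> up D le {k2}" using m unfolding up_def by blast
      qed
    qed
    ultimately have "(\<Union>m\<in>mub D le ?F. up D le {m}) \<in> M" by simp
    then obtain B where B: "B \<in> (\<lambda>m. up D le {m}) ` mub D le ?F" "B \<in> M"
      using finun[of "(\<lambda>m. up D le {m}) ` mub D le ?F"] mub_fin(1)[OF _ FK] up_sub by auto
    then obtain m where m: "m \<in> mub D le ?F" "up D le {m} \<in> M" by blast
    then have "m \<in> K" using mub_fin(2)[OF _ FK] by blast
    then have "m \<in> S" using m unfolding S_def by blast
    moreover have "le k1 m" "le k2 m" using m(1) unfolding mub_def upper_bounds_def by auto
    ultimately show "\<exists>z\<in>S. le k1 z \<and> le k2 z" by blast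
  qed
  obtain x where x: "is_lub D le S x" using lub_ex[OF dS] by blast
  have xD: "x \<in> D" using lub_D[OF x] .
  have "x \<in> C" if C: "C \<in> \<C>" for C
  proof (rule ccontr)
    assume "x \<notin> C"
    have "lawson_open D le (D - C)" using lc[OF C] unfolding lawson_closed_def by blast
    then obtain F where F: "finite F" "F \<subseteq> lawson_subbasis D le" "x \<in> D \<inter> \<Inter>F" "D \<inter> \<Inter>F \<subseteq> D - C"
      using \<open>x \<notin> C\<close> xD unfolding lawson_open_def by blast
    have "F \<subseteq> M"
    proof
      fix W assume W: "W \<in> F"
      then obtain k l where kl: "W = up D le {k} - up D le {l}" "k \<in> K" "l \<in> K"
        using F(2) unfolding lawson_subbasis_def by blast
      have "x \<in> W" using W F(3) by blast
      then have "le k x" "\<not> le l x" using kl xD unfolding up_def by auto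
      obtain s where s: "s \<in> S" "le k s" using compactsD[OF kl(2) dS x \<open>le k x\<close>] by blast
      have sD: "s \<in> D" "k \<in> D" using s(1) kl(2) compacts_sub unfolding S_def by blast+
      have "up D le {s} \<subseteq> up D le {k}"
      proof
        fix z assume "z \<in> up D le {s}"
        then have "z \<in> D" "le s z" unfolding up_def by auto
        then have "le k z" using trans[of k s z] sD s(2) by simp
        then show "z \<in> up D le {k}" using \<open>z \<in> D\<close> unfolding up_def by blast
      qed
      moreover have "up D le {s} \<in> M" using s(1) unfolding S_def by simp
      ultimately have k1: "up D le {k} \<in> M" using sup[of "up D le {s}" "up D le {k}"] up_sub[of "{k}"] by simp
      have "l \<notin> S" using lub_ub[OF x] \<open>\<not> le l x\<close> by blast
      then have "up D le {l} \<notin> M" using kl(3) unfolding S_def by blast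
      then have "D - up D le {l} \<in> M" using compl[of "up D le {l}"] up_sub by blast
      with k1 have "up D le {k} \<inter> (D - up D le {l}) \<in> M" by (rule int)
      moreover have "up D le {k} \<inter> (D - up D le {l}) = W" using kl(1) up_sub by blast
      ultimately show "W \<in> M" by simp
    qed
    then have "D \<inter> \<Inter>F \<in> M" using finint[OF F(1)] by simp
    moreover have "C \<in> M" using C M(1) by blast
    ultimately have "D \<inter> \<Inter>{D \<inter> \<Inter>F, C} \<noteq> {}" using Mne[of "{D \<inter> \<Inter>F, C}"] by simp
    moreover have "D \<inter> \<Inter>{D \<inter> \<Inter>F, C} = {}" using F(4) by auto
    ultimately show False by simp
  qed
  then show ?thesis using xD by blast
qed

end

context isol begin

lemma filtered_Inter:
  assumes "finite G" "G \<noteq> {}" "G \<subseteq> \<C>" and filt: "\<And>A B. A \<in> \<C> \<Longrightarrow> B \<in> \<C> \<Longrightarrow> \<exists>C\<in>\<C>. C \<subseteq> A \<inter> B"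
  shows "\<exists>C\<in>\<C>. C \<subseteq> \<Inter>G"
  using assms(1,2,3)
proof (induction G rule: finite_ne_induct)
  case (singleton x) then show ?case by auto
next
  case (insert x G)
  then obtain C where C: "C \<in> \<C>" "C \<subseteq> \<Inter>G" by auto
  obtain C' where "C' \<in> \<C>" "C' \<subseteq> x \<inter> C" using filt[of x C] insert.prems C(1) by auto
  then show ?case using C(2) by (intro bexI[of _ C']) auto
qed

lemma fip_filtered:
  assumes ne: "\<C> \<noteq> {}" and lc: "\<And>C. C \<in> \<C> \<Longrightarrow> lawson_closed D le C"
    and nonempty: "\<And>C. C \<in> \<C> \<Longrightarrow> C \<noteq> {}"
    and filt: "\<And>A B. A \<in> \<C> \<Longrightarrow> B \<in> \<C> \<Longrightarrow> \<exists>C\<in>\<C>. C \<subseteq> A \<inter> B"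
  shows "D \<inter> \<Inter>\<C> \<noteq> {}"
proof (rule compact_fip[OF ne lc])
  show "fipM \<C>" unfolding fipM_def
  proof (intro allI impI)
    fix G assume G: "finite G \<and> G \<subseteq> \<C>"
    show "D \<inter> \<Inter>G \<noteq> {}"
    proof (cases "G = {}")
      case True then show ?thesis using D_ne by simp
    next
      case False
      then obtain C where C: "C \<in> \<C>" "C \<subseteq> \<Inter>G" using filtered_Inter[of G \<C>] G filt by blast
      have "C \<subseteq> D" using lc[OF C(1)] lc_sub by blast
      then show ?thesis using C nonempty[OF C(1)] by blast
    qed
  qed
qed (simp add: lc)

lemma fip_seq:
  assumes lc: "\<And>n. lawson_closed D le (C n)" and ne: "\<And>n. C n \<noteq> {}"
    and dec: "\<And>n. C (Suc n) \<subseteq> C n"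
  shows "D \<inter> (\<Inter>n. C n) \<noteq> {}"
proof -
  have anti: "C n \<subseteq> C m" if "m \<le> n" for m n
    using that by (induction n rule: dec_induct) (use dec in blast)+
  have "D \<inter> \<Inter>(range C) \<noteq> {}"
  proof (rule fip_filtered)
    fix A B assume "A \<in> range C" "B \<in> range C"
    then obtain m n where "A = C m" "B = C n" by blast
    then show "\<exists>X\<in>range C. X \<subseteq> A \<inter> B" using anti[of m "max m n"] anti[of n "max m n"] by auto
  qed (use lc ne in auto)
  then show ?thesis by simp
qed

lemma sc_down_lc: assumes "lawson_closed D le C" shows "scott_closed D le (down D le C)"
proof (rule sc_intro)
  have CD: "C \<subseteq> D" using lc_sub[OF assms] .
  show "down D le C \<subseteq> D" by (rule down_sub)
  show "\<And>x y. x \<in> down D le C \<Longrightarrow> y \<in> D \<Longrightarrow> le y x \<Longrightarrow> y \<in> down D le C"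
    using down_trans CD by blast
  fix T t assume T: "directed D le T" "T \<subseteq> down D le C" "is_lub D le T t"
  have TD: "T \<subseteq> D" using dir_sub[OF T(1)] .
  let ?C = "(\<lambda>\<tau>. C \<inter> up D le {\<tau>}) ` T"
  have "D \<inter> \<Inter>?C \<noteq> {}"
  proof (rule fip_filtered)
    show "?C \<noteq> {}" using dir_ne[OF T(1)] by blast
    fix X assume "X \<in> ?C"
    then obtain \<tau> where \<tau>: "\<tau> \<in> T" "X = C \<inter> up D le {\<tau>}" by blast
    show "lawson_closed D le X" unfolding \<tau>(2) using \<tau>(1) TD
      by (intro lc_Int assms lc_up_fin) auto
    obtain c where "c \<in> C" "le \<tau> c" using T(2) \<tau>(1) by (auto elim: downE)
    then have "c \<in> X" unfolding \<tau>(2) using CD by (auto intro: upI)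
    then show "X \<noteq> {}" by blast
  next
    fix X Y assume "X \<in> ?C" "Y \<in> ?C"
    then obtain \<tau>1 \<tau>2 where t: "\<tau>1 \<in> T" "X = C \<inter> up D le {\<tau>1}" "\<tau>2 \<in> T" "Y = C \<inter> up D le {\<tau>2}" by blast
    then obtain \<tau>3 where t3: "\<tau>3 \<in> T" "le \<tau>1 \<tau>3" "le \<tau>2 \<tau>3" using dirD[OF T(1)] by blast
    have "C \<inter> up D le {\<tau>3} \<subseteq> X \<inter> Y"
    proof
      fix z assume z: "z \<in> C \<inter> up D le {\<tau>3}"
      then have zD: "z \<in> D" "le \<tau>3 z" "z \<in> C" unfolding up_def by auto
      have "le \<tau>1 z" "le \<tau>2 z" using trans[of \<tau>1 \<tau>3 z] trans[of \<tau>2 \<tau>3 z] t t3 zD TD by auto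
      then show "z \<in> X \<inter> Y" unfolding t(2,4) using zD by (auto intro: upI)
    qed
    then show "\<exists>Z\<in>?C. Z \<subseteq> X \<inter> Y" using t3(1) by blast
  qed
  then obtain c where c: "c \<in> D" "c \<in> \<Inter>?C" by blast
  have cC: "c \<in> C" using c dir_ne[OF T(1)] by blast
  have "\<And>\<tau>. \<tau> \<in> T \<Longrightarrow> le \<tau> c" using c unfolding up_def by blast
  then have "le t c" using lub_least[OF T(3) c(1)] by blast
  then show "t \<in> down D le C" using lub_D[OF T(3)] cC by (intro downI)
qed

end

context isol begin

definition "Ls S \<alpha> = scott_closure D le (\<Union>x\<in>S. Lf x \<alpha>)"
definition "Us S \<alpha> = (\<Inter>x\<in>S. Uf x \<alpha>)"

lemma UL_sub: "directed D le S \<Longrightarrow> (\<Union>x\<in>S. Lf x \<alpha>) \<subseteq> D"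
proof
  fix y assume S: "directed D le S" and "y \<in> (\<Union>x\<in>S. Lf x \<alpha>)"
  then obtain x where "x \<in> S" "y \<in> Lf x \<alpha>" by blast
  then show "y \<in> D" using L_sub[of x \<alpha>] dir_sub[OF S] by blast
qed
lemma Ls_sc: "directed D le S \<Longrightarrow> scott_closed D le (Ls S \<alpha>)"
  unfolding Ls_def by (rule cl_sc[OF UL_sub])

lemma Us_lc: "directed D le S \<Longrightarrow> lawson_closed D le (Us S \<alpha>)"
  unfolding Us_def
proof (rule lc_Inter)
  assume S: "directed D le S"
  show "(\<lambda>x. Uf x \<alpha>) ` S \<noteq> {}" using dir_ne[OF S] by simp
  fix C assume "C \<in> (\<lambda>x. Uf x \<alpha>) ` S"
  then obtain x where "x \<in> S" "C = Uf x \<alpha>" by blast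
  then show "lawson_closed D le C" using U_lc[of x \<alpha>] dir_sub[OF S] by blast
qed

lemma Us_sub: "directed D le S \<Longrightarrow> Us S \<alpha> \<subseteq> D"
  using Us_lc lc_sub by metis

lemma Us_up: "directed D le S \<Longrightarrow> upper_set D le (Us S \<alpha>)"
  unfolding upper_set_def
proof
  assume S: "directed D le S"
  show "Us S \<alpha> \<subseteq> D" using Us_sub[OF S] .
  show "up D le (Us S \<alpha>) = Us S \<alpha>"
  proof
    show "up D le (Us S \<alpha>) \<subseteq> Us S \<alpha>"
    proof
      fix y assume "y \<in> up D le (Us S \<alpha>)"
      then obtain u where u: "y \<in> D" "u \<in> Us S \<alpha>" "le u y" by (rule upE)
      show "y \<in> Us S \<alpha>" unfolding Us_def
      proof
        fix x assume "x \<in> S"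
        then show "y \<in> Uf x \<alpha>" using U_upD[of x u \<alpha> y] u dir_sub[OF S] unfolding Us_def by blast
      qed
    qed
    show "Us S \<alpha> \<subseteq> up D le (Us S \<alpha>)" using up_self Us_sub[OF S] by blast
  qed
qed

lemma Ls_eq: assumes S: "directed D le S" shows "Ls S \<alpha> = down D le (Ls S \<alpha> \<inter> Us S \<alpha>)"
proof
  have SD: "S \<subseteq> D" using dir_sub[OF S] .
  show "down D le (Ls S \<alpha> \<inter> Us S \<alpha>) \<subseteq> Ls S \<alpha>"
  proof
    fix y assume "y \<in> down D le (Ls S \<alpha> \<inter> Us S \<alpha>)"
    then obtain c where "y \<in> D" "c \<in> Ls S \<alpha>" "le y c" by (auto elim: downE)
    then show "y \<in> Ls S \<alpha>" using sc_down[OF Ls_sc[OF S]] by blast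
  qed
  have W: "scott_closed D le (down D le (Ls S \<alpha> \<inter> Us S \<alpha>))"
    by (rule sc_down_lc[OF lc_Int[OF sc_lc[OF Ls_sc[OF S]] Us_lc[OF S]]])
  have sub: "(\<Union>x\<in>S. Lf x \<alpha>) \<subseteq> down D le (Ls S \<alpha> \<inter> Us S \<alpha>)"
  proof
    fix l assume "l \<in> (\<Union>x\<in>S. Lf x \<alpha>)"
    then obtain x0 where x0: "x0 \<in> S" "l \<in> Lf x0 \<alpha>" by blast
    have x0D: "x0 \<in> D" using x0 SD by blast
    have lD: "l \<in> D" using L_sub[OF x0D] x0 by blast
    let ?C = "(\<lambda>y. up D le {l} \<inter> Ls S \<alpha> \<inter> Uf y \<alpha>) ` {y\<in>S. le x0 y}"
    have "D \<inter> \<Inter>?C \<noteq> {}"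
    proof (rule fip_filtered)
      have "le x0 x0" using refl[OF x0D] .
      then have "x0 \<in> {y\<in>S. le x0 y}" using x0(1) by simp
      then show "?C \<noteq> {}" by blast
      fix X assume "X \<in> ?C"
      then obtain y where y: "y \<in> S" "le x0 y" "X = up D le {l} \<inter> Ls S \<alpha> \<inter> Uf y \<alpha>" by blast
      have yD: "y \<in> D" using y SD by blast
      show "lawson_closed D le X" unfolding y(3)
        using lc_Int[OF lc_Int[OF lc_up_fin[of "{l}"] sc_lc[OF Ls_sc[OF S]]] U_lc[OF yD]] lD by simp
      have "l \<in> Lf y \<alpha>" using y(2) ord[OF x0D yD] x0 by blast
      then obtain l' where l': "l' \<in> Lf y \<alpha>" "l' \<in> Uf y \<alpha>" "le l l'" using L_decomp[OF yD] by blast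
      have "l' \<in> (\<Union>x\<in>S. Lf x \<alpha>)" using l'(1) y(1) by blast
      then have "l' \<in> Ls S \<alpha>" unfolding Ls_def using cl_sup[of "\<Union>x\<in>S. Lf x \<alpha>"] by (rule subsetD[rotated])
      moreover have "l' \<in> up D le {l}" using l' L_sub[OF yD] by (auto intro: upI)
      ultimately have "l' \<in> X" unfolding y(3) using l' by blast
      then show "X \<noteq> {}" by blast
    next
      fix X Y assume "X \<in> ?C" "Y \<in> ?C"
      then obtain y1 y2 where y: "y1 \<in> S" "le x0 y1" "X = up D le {l} \<inter> Ls S \<alpha> \<inter> Uf y1 \<alpha>"
        "y2 \<in> S" "le x0 y2" "Y = up D le {l} \<inter> Ls S \<alpha> \<inter> Uf y2 \<alpha>" by blast
      obtain y3 where y3: "y3 \<in> S" "le y1 y3" "le y2 y3" using dirD[OF S y(1) y(4)] by blast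
      have D3: "y1 \<in> D" "y2 \<in> D" "y3 \<in> D" using y y3 SD by auto
      have "le x0 y3" using trans[of x0 y1 y3] x0D D3 y y3 by simp
      moreover have "Uf y3 \<alpha> \<subseteq> Uf y1 \<alpha>" using ord[OF D3(1) D3(3)] y3(2) by blast
      moreover have "Uf y3 \<alpha> \<subseteq> Uf y2 \<alpha>" using ord[OF D3(2) D3(3)] y3(3) by blast
      ultimately have "up D le {l} \<inter> Ls S \<alpha> \<inter> Uf y3 \<alpha> \<in> ?C" "up D le {l} \<inter> Ls S \<alpha> \<inter> Uf y3 \<alpha> \<subseteq> X \<inter> Y"
        using y3(1) unfolding y(3,6) by auto
      then show "\<exists>Z\<in>?C. Z \<subseteq> X \<inter> Y" by (rule bexI[rotated])
    qed
    then obtain c where c: "c \<in> D" "c \<in> \<Inter>?C" by blast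
    have "x0 \<in> {y\<in>S. le x0 y}" using x0(1) refl[OF x0D] by simp
    then have cx0: "c \<in> up D le {l} \<inter> Ls S \<alpha> \<inter> Uf x0 \<alpha>" using c(2) by blast
    have "c \<in> Us S \<alpha>" unfolding Us_def
    proof
      fix y assume y: "y \<in> S"
      obtain z where z: "z \<in> S" "le x0 z" "le y z" using dirD[OF S x0(1) y] by blast
      have "z \<in> {y\<in>S. le x0 y}" using z by simp
      then have "c \<in> Uf z \<alpha>" using c(2) by blast
      moreover have "Uf z \<alpha> \<subseteq> Uf y \<alpha>" using ord[of y z] z(1,3) y SD by blast
      ultimately show "c \<in> Uf y \<alpha>" by blast
    qed
    moreover have "le l c" using cx0 unfolding up_def by blast
    ultimately show "l \<in> down D le (Ls S \<alpha> \<inter> Us S \<alpha>)" using cx0 lD by (intro downI) auto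
  qed
  have eq: "scott_closure D le (\<Union>x\<in>S. Lf x \<alpha>) = Ls S \<alpha>" unfolding Ls_def ..
  from cl_least[OF W sub] show "Ls S \<alpha> \<subseteq> down D le (Ls S \<alpha> \<inter> Us S \<alpha>)" unfolding eq .
qed

lemma LU_P: "directed D le S \<Longrightarrow> (\<lambda>\<alpha>. (Ls S \<alpha>, Us S \<alpha>)) \<in> P"
  unfolding mixed_pd_def using Ls_sc Us_lc Us_up Ls_eq by simp

lemma lub_iota: assumes S: "directed D le S" "is_lub D le S s"
  shows "Lf s \<alpha> = Ls S \<alpha>" "Uf s \<alpha> = Us S \<alpha>"
proof -
  let ?p = "\<lambda>\<alpha>. (Ls S \<alpha>, Us S \<alpha>)"
  have p: "?p \<in> P" using LU_P[OF S(1)] .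
  let ?t = "j ?p"
  have tD: "?t \<in> D" using j_D[OF p] .
  have SD: "S \<subseteq> D" using dir_sub[OF S(1)] .
  have Lt: "Lf ?t \<alpha> = Ls S \<alpha>" and Ut: "Uf ?t \<alpha> = Us S \<alpha>" for \<alpha>
    by (simp_all add: Lf_j[OF p] Uf_j[OF p])
  have "is_lub D le S ?t" unfolding is_lub_def upper_bounds_def
  proof (intro conjI ballI CollectI)
    show "?t \<in> D" by (rule tD)
    fix x assume x: "x \<in> S"
    have "\<forall>\<alpha>. Lf x \<alpha> \<subseteq> Lf ?t \<alpha> \<and> Uf ?t \<alpha> \<subseteq> Uf x \<alpha>"
      unfolding Lt Ut unfolding Ls_def Us_def using x cl_sup[of "\<Union>x\<in>S. Lf x _"] by blast
    then show "le x ?t" using ord[of x ?t] x SD tD by blast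
  next
    fix u assume u: "u \<in> {u \<in> D. \<forall>x\<in>S. le x u}"
    then have uD: "u \<in> D" and ub: "\<And>x. x \<in> S \<Longrightarrow> le x u" by auto
    have "\<forall>\<alpha>. Lf ?t \<alpha> \<subseteq> Lf u \<alpha> \<and> Uf u \<alpha> \<subseteq> Uf ?t \<alpha>"
    proof
      fix \<alpha>
      have "\<And>x. x \<in> S \<Longrightarrow> Lf x \<alpha> \<subseteq> Lf u \<alpha> \<and> Uf u \<alpha> \<subseteq> Uf x \<alpha>" using ub ord[of _ u] uD SD by blast
      then have a: "(\<Union>x\<in>S. Lf x \<alpha>) \<subseteq> Lf u \<alpha>" "Uf u \<alpha> \<subseteq> (\<Inter>x\<in>S. Uf x \<alpha>)" by blast+
      show "Lf ?t \<alpha> \<subseteq> Lf u \<alpha> \<and> Uf u \<alpha> \<subseteq> Uf ?t \<alpha>"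
        unfolding Lt Ut unfolding Ls_def Us_def using cl_least[OF L_sc[OF uD] a(1)] a(2) by simp
    qed
    then show "le ?t u" using ord[OF tD uD] by blast
  qed
  then have "s = ?t" using lub_unique S(2) by blast
  then show "Lf s \<alpha> = Ls S \<alpha>" "Uf s \<alpha> = Us S \<alpha>" using Lt Ut by simp_all
qed

lemma compact_in_closure: assumes "X \<subseteq> D" "a \<in> K" "a \<in> scott_closure D le X" shows "\<exists>x\<in>X. le a x"
proof -
  let ?W = "{y\<in>D. \<forall>k\<in>K. le k y \<longrightarrow> (\<exists>x\<in>X. le k x)}"
  have "scott_closed D le ?W"
  proof (rule sc_intro)
    show "?W \<subseteq> D" by blast
    fix x y assume xy: "x \<in> ?W" "y \<in> D" "le y x"
    show "y \<in> ?W"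
    proof (intro CollectI conjI ballI impI)
      show "y \<in> D" by fact
      fix k assume "k \<in> K" "le k y"
      then have "le k x" using trans[of k y x] xy compacts_sub by blast
      then show "\<exists>x\<in>X. le k x" using xy \<open>k \<in> K\<close> by blast
    qed
  next
    fix T t assume T: "directed D le T" "T \<subseteq> ?W" "is_lub D le T t"
    show "t \<in> ?W"
    proof (intro CollectI conjI ballI impI)
      show "t \<in> D" using lub_D[OF T(3)] .
      fix k assume "k \<in> K" "le k t"
      then obtain \<tau> where "\<tau> \<in> T" "le k \<tau>" using compactsD[OF _ T(1) T(3)] by blast
      then show "\<exists>x\<in>X. le k x" using T(2) \<open>k \<in> K\<close> by blast
    qed
  qed
  moreover have "X \<subseteq> ?W"
  proof
    fix y assume y: "y \<in> X"
    then have yD: "y \<in> D" using assms(1) by blast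
    show "y \<in> ?W" using y yD by blast
  qed
  ultimately have "a \<in> ?W" using cl_least assms(3) by blast
  then show ?thesis using assms(2) refl compacts_sub by blast
qed

lemma compact_elem:
  assumes zD: "z \<in> D"
    and A: "\<And>\<alpha>. finite (A \<alpha>)" "\<And>\<alpha>. A \<alpha> \<subseteq> K" "\<And>\<alpha>. Lf z \<alpha> = down D le (A \<alpha>)"
    and B: "\<And>\<alpha>. finite (B \<alpha>)" "\<And>\<alpha>. B \<alpha> \<subseteq> K" "\<And>\<alpha>. Uf z \<alpha> = up D le (B \<alpha>)"
  shows "z \<in> K"
  unfolding compacts_def
proof (intro CollectI conjI allI impI zD)
  fix S s assume Ss: "directed D le S \<and> is_lub D le S s \<and> le z s"
  then have S: "directed D le S" "is_lub D le S s" "le z s" by auto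
  have SD: "S \<subseteq> D" using dir_sub[OF S(1)] .
  have sD: "s \<in> D" using lub_D[OF S(2)] .
  let ?Q = "\<lambda>(\<alpha>, b::bool) x. if b then A \<alpha> \<subseteq> Lf x \<alpha> else Uf x \<alpha> \<subseteq> up D le (B \<alpha>)"
  have "\<exists>x\<in>S. \<forall>i\<in>UNIV. ?Q i x"
  proof (rule finite_dir_common[OF S(1)])
    show "finite (UNIV :: ('act \<times> bool) set)" by simp
  next
    fix i x y assume "i \<in> (UNIV :: ('act \<times> bool) set)" "x \<in> S" "y \<in> S" "le x y" "?Q i x"
    then have "\<forall>\<alpha>. Lf x \<alpha> \<subseteq> Lf y \<alpha> \<and> Uf y \<alpha> \<subseteq> Uf x \<alpha>" using ord[of x y] SD by blast
    then show "?Q i y" using \<open>?Q i x\<close> by (cases i) (auto split: if_splits)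
  next
    fix i :: "'act \<times> bool"
    obtain \<alpha> b where i: "i = (\<alpha>, b)" by (cases i)
    show "\<exists>x\<in>S. ?Q i x"
    proof (cases b)
      case True
      have "\<exists>x\<in>S. \<forall>a\<in>A \<alpha>. a \<in> Lf x \<alpha>"
      proof (rule finite_dir_common[OF S(1) A(1)])
        fix a assume a: "a \<in> A \<alpha>"
        have aD: "a \<in> D" using a A(2) compacts_sub by blast
        have "a \<in> Lf z \<alpha>" unfolding A(3) using a aD refl by (intro downI)
        then have "a \<in> Lf s \<alpha>" using ord[OF zD sD] S(3) by blast
        then have "a \<in> scott_closure D le (\<Union>x\<in>S. Lf x \<alpha>)" using lub_iota(1)[OF S(1,2)] Ls_def by simp
        then obtain l where l: "l \<in> (\<Union>x\<in>S. Lf x \<alpha>)" "le a l"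
          using compact_in_closure[OF UL_sub[OF S(1)], of a] a A(2) by blast
        then obtain x where x: "x \<in> S" "l \<in> Lf x \<alpha>" by blast
        have xD: "x \<in> D" using x(1) SD by blast
        have "a \<in> Lf x \<alpha>" using sc_down[OF L_sc[OF xD] x(2) aD l(2)] .
        then show "\<exists>x\<in>S. a \<in> Lf x \<alpha>" using x by blast
      next
        fix a x y assume "a \<in> A \<alpha>" "x \<in> S" "y \<in> S" "le x y" "a \<in> Lf x \<alpha>"
        then have "x \<in> D" "y \<in> D" using SD by blast+
        then show "a \<in> Lf y \<alpha>" using ord[of x y] \<open>le x y\<close> \<open>a \<in> Lf x \<alpha>\<close> by blast
      qed
      then show ?thesis using i True by auto
    next
      case False
      have "\<exists>x\<in>S. Uf x \<alpha> \<subseteq> up D le (B \<alpha>)"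
      proof (rule ccontr)
        assume nx: "\<not> ?thesis"
        have lcB: "lawson_closed D le (D - up D le (B \<alpha>))"
          using lo_lc[OF so_lo[OF so_upK[OF B(2)]]] .
        let ?C = "(\<lambda>x. Uf x \<alpha> \<inter> (D - up D le (B \<alpha>))) ` S"
        have "D \<inter> \<Inter>?C \<noteq> {}"
        proof (rule fip_filtered)
          show "?C \<noteq> {}" using dir_ne[OF S(1)] by blast
          fix X assume "X \<in> ?C"
          then obtain x where x: "x \<in> S" "X = Uf x \<alpha> \<inter> (D - up D le (B \<alpha>))" by blast
          have xD: "x \<in> D" using x(1) SD by blast
          show "lawson_closed D le X" unfolding x(2) by (rule lc_Int[OF U_lc[OF xD] lcB])
          show "X \<noteq> {}" using nx x U_sub SD by blast
        next
          fix X Y assume "X \<in> ?C" "Y \<in> ?C"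
          then obtain x y where xy: "x \<in> S" "X = Uf x \<alpha> \<inter> (D - up D le (B \<alpha>))"
            "y \<in> S" "Y = Uf y \<alpha> \<inter> (D - up D le (B \<alpha>))" by blast
          obtain w where w: "w \<in> S" "le x w" "le y w" using dirD[OF S(1) xy(1,3)] by blast
          have D3: "x \<in> D" "y \<in> D" "w \<in> D" using xy(1,3) w(1) SD by blast+
          have "Uf w \<alpha> \<subseteq> Uf x \<alpha>" using ord[OF D3(1,3)] w(2) by blast
          moreover have "Uf w \<alpha> \<subseteq> Uf y \<alpha>" using ord[OF D3(2,3)] w(3) by blast
          ultimately have "Uf w \<alpha> \<inter> (D - up D le (B \<alpha>)) \<in> ?C" "Uf w \<alpha> \<inter> (D - up D le (B \<alpha>)) \<subseteq> X \<inter> Y"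
            using w(1) unfolding xy(2,4) by auto
          then show "\<exists>Z\<in>?C. Z \<subseteq> X \<inter> Y" by (rule bexI[rotated])
        qed
        then obtain c where c: "c \<in> D" "c \<in> \<Inter>?C" by blast
        have "c \<in> Us S \<alpha>" unfolding Us_def
        proof
          fix x assume "x \<in> S"
          then have "Uf x \<alpha> \<inter> (D - up D le (B \<alpha>)) \<in> ?C" by blast
          then show "c \<in> Uf x \<alpha>" using c(2) by blast
        qed
        then have "c \<in> Uf s \<alpha>" using lub_iota(2)[OF S(1,2)] by simp
        then have "c \<in> Uf z \<alpha>" using ord[OF zD sD] S(3) by blast
        then have "c \<in> up D le (B \<alpha>)" using B(3) by simp
        moreover obtain x where "x \<in> S" using dir_ne[OF S(1)] by blast
        then have "Uf x \<alpha> \<inter> (D - up D le (B \<alpha>)) \<in> ?C" by blast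
        then have "c \<notin> up D le (B \<alpha>)" using c(2) by blast
        ultimately show False by blast
      qed
      then show ?thesis using i False by auto
    qed
  qed
  then obtain x where x0: "x \<in> S" "\<forall>i\<in>UNIV. ?Q i x" by blast
  have x: "A \<alpha> \<subseteq> Lf x \<alpha>" "Uf x \<alpha> \<subseteq> up D le (B \<alpha>)" for \<alpha>
    using x0(2)[rule_format, of "(\<alpha>, True)"] x0(2)[rule_format, of "(\<alpha>, False)"] by simp_all
  note x = x0(1) x
  have xD: "x \<in> D" using x SD by blast
  have "\<forall>\<alpha>. Lf z \<alpha> \<subseteq> Lf x \<alpha> \<and> Uf x \<alpha> \<subseteq> Uf z \<alpha>"
  proof
    fix \<alpha>
    have "down D le (A \<alpha>) \<subseteq> Lf x \<alpha>"
    proof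
      fix y assume "y \<in> down D le (A \<alpha>)"
      then obtain a where "y \<in> D" "a \<in> A \<alpha>" "le y a" by (rule downE)
      then show "y \<in> Lf x \<alpha>" using sc_down[OF L_sc[OF xD]] x(2) by blast
    qed
    then show "Lf z \<alpha> \<subseteq> Lf x \<alpha> \<and> Uf x \<alpha> \<subseteq> Uf z \<alpha>" using A(3) B(3) x(3) by simp
  qed
  then show "\<exists>x\<in>S. le z x" using ord[OF zD xD] x(1) by blast
qed

end

context isol begin

lemma finite_funs: "finite B \<Longrightarrow> finite {f :: 'act \<Rightarrow> 'b. \<forall>\<alpha>. f \<alpha> \<in> B}"
  using finite_set_of_finite_funs[of "UNIV :: 'act set" B undefined] by simp

lemma down_mono': assumes "A \<subseteq> D" "B \<subseteq> D" "\<And>a. a \<in> A \<Longrightarrow> \<exists>b\<in>B. le a b"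
  shows "down D le A \<subseteq> down D le B"
proof
  fix y assume "y \<in> down D le A"
  then obtain a where a: "y \<in> D" "a \<in> A" "le y a" by (rule downE)
  then obtain b where b: "b \<in> B" "le a b" using assms(3) by blast
  have "le y b" using trans[of y a b] a b assms(1,2) by blast
  then show "y \<in> down D le B" using a(1) b(1) unfolding down_def by blast
qed

lemma up_mono': assumes "A \<subseteq> D" "B \<subseteq> D" "\<And>b. b \<in> B \<Longrightarrow> \<exists>a\<in>A. le a b"
  shows "up D le B \<subseteq> up D le A"
proof
  fix y assume "y \<in> up D le B"
  then obtain b where b: "y \<in> D" "b \<in> B" "le b y" by (rule upE)
  then obtain a where a: "a \<in> A" "le a b" using assms(3) by blast
  have "le a y" using trans[of a b y] a b assms(1,2) by blast
  then show "y \<in> up D le A" using b(1) a(1) unfolding up_def by blast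
qed

lemma up_up: "X \<subseteq> D \<Longrightarrow> up D le (up D le X) = up D le X"
proof
  assume X: "X \<subseteq> D"
  show "up D le (up D le X) \<subseteq> up D le X"
    by (rule up_mono'[OF X up_sub]) (auto elim: upE)
  show "up D le X \<subseteq> up D le (up D le X)" using up_self[OF up_sub] .
qed

definition "good g \<longleftrightarrow> (\<forall>x\<in>D. g x \<in> D) \<and> finite (g ` D) \<and> (\<forall>x\<in>D. \<forall>y\<in>D. le x y \<longrightarrow> le (g x) (g y))"

definition "pair g x \<alpha> = (down D le (g ` Lf x \<alpha>), up D le (g ` Uf x \<alpha>))"

lemma pair_P: assumes g: "good g" and xD: "x \<in> D" shows "pair g x \<in> P"
proof (intro CollectI allI)
  fix \<alpha>
  have gD: "\<And>x. x \<in> D \<Longrightarrow> g x \<in> D" and gfin: "finite (g ` D)"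
    and gm: "\<And>x y. x \<in> D \<Longrightarrow> y \<in> D \<Longrightarrow> le x y \<Longrightarrow> le (g x) (g y)" using g unfolding good_def by auto
  have LD: "g ` Lf x \<alpha> \<subseteq> D" "g ` Uf x \<alpha> \<subseteq> D" using L_sub[OF xD] U_sub[OF xD] gD by blast+
  have LF: "finite (g ` Lf x \<alpha>)" "finite (g ` Uf x \<alpha>)"
    using L_sub[OF xD] U_sub[OF xD] gfin by (meson finite_subset image_mono)+
  have sc: "scott_closed D le (down D le (g ` Lf x \<alpha>))" by (rule sc_down_fin[OF LF(1) LD(1)])
  have lc: "lawson_closed D le (up D le (g ` Uf x \<alpha>))" by (rule lc_up_fin[OF LF(2) LD(2)])
  have upp: "upper_set D le (up D le (g ` Uf x \<alpha>))" unfolding upper_set_def using up_sub up_up[OF LD(2)] by blast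
  have eq: "down D le (g ` Lf x \<alpha>) = down D le (down D le (g ` Lf x \<alpha>) \<inter> up D le (g ` Uf x \<alpha>))"
  proof
    show "down D le (down D le (g ` Lf x \<alpha>) \<inter> up D le (g ` Uf x \<alpha>)) \<subseteq> down D le (g ` Lf x \<alpha>)"
      by (rule down_mono') (use down_sub LD in \<open>auto elim: downE\<close>)
    show "down D le (g ` Lf x \<alpha>) \<subseteq> down D le (down D le (g ` Lf x \<alpha>) \<inter> up D le (g ` Uf x \<alpha>))"
    proof (rule down_mono'[OF LD(1)])
      show "down D le (g ` Lf x \<alpha>) \<inter> up D le (g ` Uf x \<alpha>) \<subseteq> D" using down_sub by blast
      fix a assume "a \<in> g ` Lf x \<alpha>"
      then obtain l where l: "l \<in> Lf x \<alpha>" "a = g l" by blast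
      obtain l' where l': "l' \<in> Lf x \<alpha>" "l' \<in> Uf x \<alpha>" "le l l'" using L_decomp[OF xD l(1)] by blast
      have lD: "l \<in> D" "l' \<in> D" using l l' L_sub[OF xD] by blast+
      have "g l' \<in> down D le (g ` Lf x \<alpha>)" using l'(1) gD[OF lD(2)] refl[OF gD[OF lD(2)]] by (intro downI) auto
      moreover have "g l' \<in> up D le (g ` Uf x \<alpha>)" using l'(2) gD[OF lD(2)] refl[OF gD[OF lD(2)]] by (intro upI) auto
      moreover have "le a (g l')" using gm[OF lD l'(3)] l(2) by simp
      ultimately show "\<exists>b\<in>down D le (g ` Lf x \<alpha>) \<inter> up D le (g ` Uf x \<alpha>). le a b" by blast
    qed
  qed
  show "pair g x \<alpha> \<in> mixed_pd D le" unfolding pair_def mixed_pd_def using sc lc upp eq by simp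
qed

lemma Lf_pair: "good g \<Longrightarrow> x \<in> D \<Longrightarrow> Lf (j (pair g x)) \<alpha> = down D le (g ` Lf x \<alpha>)"
  using Lf_j[OF pair_P] unfolding pair_def by simp
lemma Uf_pair: "good g \<Longrightarrow> x \<in> D \<Longrightarrow> Uf (j (pair g x)) \<alpha> = up D le (g ` Uf x \<alpha>)"
  using Uf_j[OF pair_P] unfolding pair_def by simp

primrec pr :: "nat \<Rightarrow> 'd \<Rightarrow> 'd" where
  "pr 0 x = bt"
| "pr (Suc n) x = j (pair (pr n) x)"

definition "pinv g \<longleftrightarrow> good g \<and> (\<forall>x\<in>D. g x \<in> K) \<and> (\<forall>x\<in>D. le (g x) x) \<and> (\<forall>x\<in>D. g (g x) = g x)"

lemma inv_pr: "pinv (pr n)"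
proof (induction n)
  case 0
  have "pr 0 = (\<lambda>x. bt)" by auto
  moreover have "good (\<lambda>x. bt)" unfolding good_def using bt_D refl[OF bt_D]
    by (auto intro: finite_subset[of _ "{bt}"])
  ultimately show ?case unfolding pinv_def using bt_K bt_le by simp
next
  case (Suc n)
  let ?g = "pr n"
  have g: "good ?g" and gK: "\<And>x. x \<in> D \<Longrightarrow> ?g x \<in> K" and gle: "\<And>x. x \<in> D \<Longrightarrow> le (?g x) x"
    and gid: "\<And>x. x \<in> D \<Longrightarrow> ?g (?g x) = ?g x" using Suc unfolding pinv_def by auto
  have gD: "\<And>x. x \<in> D \<Longrightarrow> ?g x \<in> D" and gfin: "finite (?g ` D)"
    and gm: "\<And>x y. x \<in> D \<Longrightarrow> y \<in> D \<Longrightarrow> le x y \<Longrightarrow> le (?g x) (?g y)" using g unfolding good_def by auto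
  let ?h = "pr (Suc n)"
  have hD: "?h x \<in> D" if "x \<in> D" for x using j_D[OF pair_P[OF g that]] by simp
  have hL: "Lf (?h x) \<alpha> = down D le (?g ` Lf x \<alpha>)" if "x \<in> D" for x \<alpha> using Lf_pair[OF g that] by simp
  have hU: "Uf (?h x) \<alpha> = up D le (?g ` Uf x \<alpha>)" if "x \<in> D" for x \<alpha> using Uf_pair[OF g that] by simp
  have fin: "finite (?h ` D)"
  proof -
    let ?X = "(\<lambda>(A, B). (down D le A, up D le B)) ` (Pow (?g ` D) \<times> Pow (?g ` D))"
    have "finite ?X" using gfin by simp
    then have "finite {p :: 'act \<Rightarrow> _. \<forall>\<alpha>. p \<alpha> \<in> ?X}" by (rule finite_funs)
    then have "finite (j ` {p :: 'act \<Rightarrow> _. \<forall>\<alpha>. p \<alpha> \<in> ?X})" by simp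
    moreover have "?h ` D \<subseteq> j ` {p. \<forall>\<alpha>. p \<alpha> \<in> ?X}"
    proof
      fix y assume "y \<in> ?h ` D"
      then obtain x where x: "x \<in> D" "y = ?h x" by blast
      have "pair ?g x \<alpha> \<in> ?X" for \<alpha>
      proof -
        have "(pr n ` Lf x \<alpha>, pr n ` Uf x \<alpha>) \<in> Pow (?g ` D) \<times> Pow (?g ` D)"
          using L_sub[OF x(1)] U_sub[OF x(1)] by blast
        then show ?thesis unfolding pair_def by (rule rev_image_eqI) simp
      qed
      then show "y \<in> j ` {p. \<forall>\<alpha>. p \<alpha> \<in> ?X}" using x by simp
    qed
    ultimately show ?thesis by (rule finite_subset[rotated])
  qed
  have hm: "le (?h x) (?h y)" if xy: "x \<in> D" "y \<in> D" "le x y" for x y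
  proof -
    have "\<forall>\<alpha>. Lf (?h x) \<alpha> \<subseteq> Lf (?h y) \<alpha> \<and> Uf (?h y) \<alpha> \<subseteq> Uf (?h x) \<alpha>"
    proof
      fix \<alpha>
      have s: "Lf x \<alpha> \<subseteq> Lf y \<alpha>" "Uf y \<alpha> \<subseteq> Uf x \<alpha>" using ord[OF xy(1,2)] xy(3) by blast+
      have i1: "?g ` Lf x \<alpha> \<subseteq> D" "?g ` Lf y \<alpha> \<subseteq> D" "?g ` Uf x \<alpha> \<subseteq> D" "?g ` Uf y \<alpha> \<subseteq> D"
        using L_sub[OF xy(1)] L_sub[OF xy(2)] U_sub[OF xy(1)] U_sub[OF xy(2)] gD by blast+
      have "down D le (?g ` Lf x \<alpha>) \<subseteq> down D le (?g ` Lf y \<alpha>)"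
      proof (rule down_mono'[OF i1(1,2)])
        fix a assume "a \<in> ?g ` Lf x \<alpha>"
        then have "a \<in> ?g ` Lf y \<alpha>" "a \<in> D" using s i1 by blast+
        then show "\<exists>b\<in>?g ` Lf y \<alpha>. le a b" using refl by blast
      qed
      moreover have "up D le (?g ` Uf y \<alpha>) \<subseteq> up D le (?g ` Uf x \<alpha>)"
      proof (rule up_mono'[OF i1(3,4)])
        fix a assume "a \<in> ?g ` Uf y \<alpha>"
        then have "a \<in> ?g ` Uf x \<alpha>" "a \<in> D" using s i1 by blast+
        then show "\<exists>b\<in>?g ` Uf x \<alpha>. le b a" using refl by blast
      qed
      ultimately show "Lf (?h x) \<alpha> \<subseteq> Lf (?h y) \<alpha> \<and> Uf (?h y) \<alpha> \<subseteq> Uf (?h x) \<alpha>"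
        using hL[OF xy(1)] hL[OF xy(2)] hU[OF xy(1)] hU[OF xy(2)] by simp
    qed
    then show ?thesis using ord[OF hD[OF xy(1)] hD[OF xy(2)]] by blast
  qed
  have hgood: "good ?h" unfolding good_def using hD fin hm by blast
  have gimgK: "?g ` D \<subseteq> K" using gK by blast
  have hK: "?h x \<in> K" if x: "x \<in> D" for x
  proof (rule compact_elem[OF hD[OF x]])
    show "finite (?g ` Lf x \<alpha>)" "finite (?g ` Uf x \<alpha>)" for \<alpha>
      using gfin L_sub[OF x] U_sub[OF x] by (meson finite_subset image_mono)+
    show "?g ` Lf x \<alpha> \<subseteq> K" "?g ` Uf x \<alpha> \<subseteq> K" for \<alpha>
      using gimgK L_sub[OF x] U_sub[OF x] by blast+
    show "Lf (?h x) \<alpha> = down D le (?g ` Lf x \<alpha>)" "Uf (?h x) \<alpha> = up D le (?g ` Uf x \<alpha>)" for \<alpha>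
      using hL[OF x] hU[OF x] by simp_all
  qed
  have hle: "le (?h x) x" if x: "x \<in> D" for x
  proof -
    have "\<forall>\<alpha>. Lf (?h x) \<alpha> \<subseteq> Lf x \<alpha> \<and> Uf x \<alpha> \<subseteq> Uf (?h x) \<alpha>"
    proof
      fix \<alpha>
      have "down D le (?g ` Lf x \<alpha>) \<subseteq> Lf x \<alpha>"
      proof
        fix y assume "y \<in> down D le (?g ` Lf x \<alpha>)"
        then obtain l where l: "y \<in> D" "l \<in> Lf x \<alpha>" "le y (?g l)" by (auto elim!: downE)
        have lD: "l \<in> D" using l(2) L_sub[OF x] by blast
        have "le y l" using trans[OF l(1) gD[OF lD] lD l(3) gle[OF lD]] .
        then show "y \<in> Lf x \<alpha>" using sc_down[OF L_sc[OF x] l(2) l(1)] by simp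
      qed
      moreover have "Uf x \<alpha> \<subseteq> up D le (?g ` Uf x \<alpha>)"
      proof
        fix u assume u: "u \<in> Uf x \<alpha>"
        then have uD: "u \<in> D" using U_sub[OF x] by blast
        show "u \<in> up D le (?g ` Uf x \<alpha>)" using u uD gle[OF uD] by (intro upI) auto
      qed
      ultimately show "Lf (?h x) \<alpha> \<subseteq> Lf x \<alpha> \<and> Uf x \<alpha> \<subseteq> Uf (?h x) \<alpha>" using hL[OF x] hU[OF x] by simp
    qed
    then show ?thesis using ord[OF hD[OF x] x] by blast
  qed
  have hid: "?h (?h x) = ?h x" if x: "x \<in> D" for x
  proof (rule iota_eq[OF hD[OF hD[OF x]] hD[OF x]])
    fix \<alpha>
    have LgD: "?g ` Lf x \<alpha> \<subseteq> D" "?g ` Uf x \<alpha> \<subseteq> D" using L_sub[OF x] U_sub[OF x] gD by blast+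
    show "Lf (?h (?h x)) \<alpha> = Lf (?h x) \<alpha>"
      unfolding hL[OF hD[OF x]] hL[OF x]
    proof
      show "down D le (?g ` down D le (?g ` Lf x \<alpha>)) \<subseteq> down D le (?g ` Lf x \<alpha>)"
      proof (rule down_mono'[OF _ LgD(1)])
        show "?g ` down D le (?g ` Lf x \<alpha>) \<subseteq> D" using down_sub gD by blast
        fix a assume "a \<in> ?g ` down D le (?g ` Lf x \<alpha>)"
        then obtain w l where w: "a = ?g w" "w \<in> D" "l \<in> Lf x \<alpha>" "le w (?g l)" by (auto elim!: downE)
        have lD: "l \<in> D" using w(3) L_sub[OF x] by blast
        have "le a (?g (?g l))" using gm[OF w(2) gD[OF lD] w(4)] w(1) by simp
        then have "le a (?g l)" using gid[OF lD] by simp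
        then show "\<exists>b\<in>?g ` Lf x \<alpha>. le a b" using w(3) by blast
      qed
      show "down D le (?g ` Lf x \<alpha>) \<subseteq> down D le (?g ` down D le (?g ` Lf x \<alpha>))"
      proof (rule down_mono'[OF LgD(1)])
        show "?g ` down D le (?g ` Lf x \<alpha>) \<subseteq> D" using down_sub gD by blast
        fix a assume "a \<in> ?g ` Lf x \<alpha>"
        then obtain l where l: "a = ?g l" "l \<in> Lf x \<alpha>" by blast
        have lD: "l \<in> D" using l(2) L_sub[OF x] by blast
        have "?g l \<in> down D le (?g ` Lf x \<alpha>)" using l(2) gD[OF lD] refl[OF gD[OF lD]] by (intro downI) auto
        then have "?g (?g l) \<in> ?g ` down D le (?g ` Lf x \<alpha>)" by blast
        then show "\<exists>b\<in>?g ` down D le (?g ` Lf x \<alpha>). le a b" using gid[OF lD] l(1) refl[OF gD[OF lD]] by auto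
      qed
    qed
    show "Uf (?h (?h x)) \<alpha> = Uf (?h x) \<alpha>"
      unfolding hU[OF hD[OF x]] hU[OF x]
    proof
      show "up D le (?g ` up D le (?g ` Uf x \<alpha>)) \<subseteq> up D le (?g ` Uf x \<alpha>)"
      proof (rule up_mono'[OF LgD(2)])
        show "?g ` up D le (?g ` Uf x \<alpha>) \<subseteq> D" using up_sub gD by blast
        fix b assume "b \<in> ?g ` up D le (?g ` Uf x \<alpha>)"
        then obtain w u where w: "b = ?g w" "w \<in> D" "u \<in> Uf x \<alpha>" "le (?g u) w" by (auto elim!: upE)
        have uD: "u \<in> D" using w(3) U_sub[OF x] by blast
        have "le (?g (?g u)) b" using gm[OF gD[OF uD] w(2) w(4)] w(1) by simp
        then have "le (?g u) b" using gid[OF uD] by simp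
        then show "\<exists>a\<in>?g ` Uf x \<alpha>. le a b" using w(3) by blast
      qed
      show "up D le (?g ` Uf x \<alpha>) \<subseteq> up D le (?g ` up D le (?g ` Uf x \<alpha>))"
      proof (rule up_mono'[OF _ LgD(2)])
        show "?g ` up D le (?g ` Uf x \<alpha>) \<subseteq> D" using up_sub gD by blast
        fix b assume "b \<in> ?g ` Uf x \<alpha>"
        then obtain u where u: "b = ?g u" "u \<in> Uf x \<alpha>" by blast
        have uD: "u \<in> D" using u(2) U_sub[OF x] by blast
        have "?g u \<in> up D le (?g ` Uf x \<alpha>)" using u(2) gD[OF uD] refl[OF gD[OF uD]] by (intro upI) auto
        then have "?g (?g u) \<in> ?g ` up D le (?g ` Uf x \<alpha>)" by blast
        then show "\<exists>a\<in>?g ` up D le (?g ` Uf x \<alpha>). le a b" using gid[OF uD] u(1) refl[OF gD[OF uD]] by auto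
      qed
    qed
  qed
  show ?case unfolding pinv_def using hgood hK hle hid by blast
qed

end

context isol begin

lemma prD: "x \<in> D \<Longrightarrow> pr n x \<in> D" using inv_pr[of n] unfolding pinv_def good_def by blast
lemma pr_K: "x \<in> D \<Longrightarrow> pr n x \<in> K" using inv_pr[of n] unfolding pinv_def by blast
lemma pr_le: "x \<in> D \<Longrightarrow> le (pr n x) x" using inv_pr[of n] unfolding pinv_def by blast
lemma pr_idem: "x \<in> D \<Longrightarrow> pr n (pr n x) = pr n x" using inv_pr[of n] unfolding pinv_def by blast
lemma pr_good: "good (pr n)" using inv_pr[of n] unfolding pinv_def by blast
lemma pr_mono: "x \<in> D \<Longrightarrow> y \<in> D \<Longrightarrow> le x y \<Longrightarrow> le (pr n x) (pr n y)"
  using pr_good[of n] unfolding good_def by blast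
lemma pr_L: "x \<in> D \<Longrightarrow> Lf (pr (Suc n) x) \<alpha> = down D le (pr n ` Lf x \<alpha>)"
  using Lf_pair[OF pr_good] by simp
lemma pr_U: "x \<in> D \<Longrightarrow> Uf (pr (Suc n) x) \<alpha> = up D le (pr n ` Uf x \<alpha>)"
  using Uf_pair[OF pr_good] by simp
lemma Lf_bt: "Lf bt \<alpha> = {}" unfolding bt_def using Lf_j[OF P_bot] by simp
lemma Uf_bt: "Uf bt \<alpha> = D" unfolding bt_def using Uf_j[OF P_bot] by simp

lemma pr_chain: "x \<in> D \<Longrightarrow> le (pr n x) (pr (Suc n) x)"
proof (induction n arbitrary: x)
  case 0 then show ?case using bt_le[OF prD[OF 0, of 1]] by simp
next
  case (Suc n)
  have xD: "x \<in> D" by fact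
  have i1: "pr n ` Lf x \<alpha> \<subseteq> D" "pr (Suc n) ` Lf x \<alpha> \<subseteq> D" "pr n ` Uf x \<alpha> \<subseteq> D" "pr (Suc n) ` Uf x \<alpha> \<subseteq> D" for \<alpha>
    using L_sub[OF xD] U_sub[OF xD] prD by blast+
  have "\<forall>\<alpha>. Lf (pr (Suc n) x) \<alpha> \<subseteq> Lf (pr (Suc (Suc n)) x) \<alpha> \<and> Uf (pr (Suc (Suc n)) x) \<alpha> \<subseteq> Uf (pr (Suc n) x) \<alpha>"
  proof
    fix \<alpha>
    have "down D le (pr n ` Lf x \<alpha>) \<subseteq> down D le (pr (Suc n) ` Lf x \<alpha>)"
    proof (rule down_mono'[OF i1(1,2)])
      fix a assume "a \<in> pr n ` Lf x \<alpha>"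
      then obtain l where "l \<in> Lf x \<alpha>" "a = pr n l" by blast
      moreover then have "l \<in> D" using L_sub[OF xD] by blast
      ultimately show "\<exists>b\<in>pr (Suc n) ` Lf x \<alpha>. le a b" using Suc.IH by blast
    qed
    moreover have "up D le (pr (Suc n) ` Uf x \<alpha>) \<subseteq> up D le (pr n ` Uf x \<alpha>)"
    proof (rule up_mono'[OF i1(3,4)])
      fix b assume "b \<in> pr (Suc n) ` Uf x \<alpha>"
      then obtain u where "u \<in> Uf x \<alpha>" "b = pr (Suc n) u" by blast
      moreover then have "u \<in> D" using U_sub[OF xD] by blast
      ultimately show "\<exists>a\<in>pr n ` Uf x \<alpha>. le a b" using Suc.IH by blast
    qed
    ultimately show "Lf (pr (Suc n) x) \<alpha> \<subseteq> Lf (pr (Suc (Suc n)) x) \<alpha> \<and> Uf (pr (Suc (Suc n)) x) \<alpha> \<subseteq> Uf (pr (Suc n) x) \<alpha>"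
      using pr_L[OF xD] pr_U[OF xD] by simp
  qed
  then show ?case using ord[OF prD[OF xD] prD[OF xD]] by blast
qed

lemma pr_mono_n: "x \<in> D \<Longrightarrow> m \<le> n \<Longrightarrow> le (pr m x) (pr n x)"
proof (induction n)
  case 0 then show ?case using refl[OF bt_D] by simp
next
  case (Suc n)
  show ?case
  proof (cases "m = Suc n")
    case True then show ?thesis using refl[OF prD[OF Suc.prems(1)], of "Suc n"] by (simp del: pr.simps)
  next
    case False
    then have "le (pr m x) (pr n x)" using Suc by simp
    then show ?thesis using trans[OF prD prD prD _ pr_chain] Suc.prems(1) by blast
  qed
qed

lemma pr_cont: "scott_continuous D le (pr n)"
  unfolding scott_continuous_def
proof (intro conjI allI impI ballI)
  show "pr n ` D \<subseteq> D" using prD by blast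
  show "\<And>x y. x \<in> D \<Longrightarrow> y \<in> D \<Longrightarrow> le x y \<Longrightarrow> le (pr n x) (pr n y)" by (rule pr_mono)
  fix S s assume Ss: "directed D le S \<and> is_lub D le S s"
  then have S: "directed D le S" "is_lub D le S s" by auto
  have SD: "S \<subseteq> D" using dir_sub[OF S(1)] .
  have sD: "s \<in> D" using lub_D[OF S(2)] .
  show "is_lub D le (pr n ` S) (pr n s)" unfolding is_lub_def upper_bounds_def
  proof (intro conjI CollectI ballI)
    show "pr n s \<in> D" using prD[OF sD] .
    fix y assume "y \<in> pr n ` S"
    then obtain x where x: "x \<in> S" "y = pr n x" by blast
    then show "le y (pr n s)" using pr_mono[of x s n] SD sD lub_ub[OF S(2)] by blast
  next
    fix u assume "u \<in> {u \<in> D. \<forall>x\<in>pr n ` S. le x u}"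
    then have u: "u \<in> D" "\<And>x. x \<in> S \<Longrightarrow> le (pr n x) u" by auto
    obtain x where x: "x \<in> S" "le (pr n s) x" using compactsD[OF pr_K[OF sD] S(1) S(2) pr_le[OF sD]] by blast
    have xD: "x \<in> D" using x SD by blast
    have "le (pr n (pr n s)) (pr n x)" using pr_mono[OF prD[OF sD] xD x(2)] .
    then have "le (pr n s) (pr n x)" using pr_idem[OF sD] by simp
    then show "le (pr n s) u" using trans[OF prD[OF sD] prD[OF xD] u(1) _ u(2)[OF x(1)]] by blast
  qed
qed

lemma chain_dir: "x \<in> D \<Longrightarrow> directed D le (range (\<lambda>n. pr n x))"
  unfolding directed_def
proof (intro conjI ballI)
  assume xD: "x \<in> D"
  show "range (\<lambda>n. pr n x) \<subseteq> D" using prD[OF xD] by blast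
  show "range (\<lambda>n. pr n x) \<noteq> {}" by simp
  fix a b assume "a \<in> range (\<lambda>n. pr n x)" "b \<in> range (\<lambda>n. pr n x)"
  then obtain m n where "a = pr m x" "b = pr n x" by blast
  then show "\<exists>z\<in>range (\<lambda>n. pr n x). le a z \<and> le b z"
    using pr_mono_n[OF xD, of m "max m n"] pr_mono_n[OF xD, of n "max m n"] by auto
qed

definition "q x = (SOME s. is_lub D le (range (\<lambda>n. pr n x)) s)"

lemma q_lub: "x \<in> D \<Longrightarrow> is_lub D le (range (\<lambda>n. pr n x)) (q x)"
  unfolding q_def using lub_ex[OF chain_dir] by (rule someI_ex)
lemma qD: "x \<in> D \<Longrightarrow> q x \<in> D" using lub_D[OF q_lub] .
lemma pr_le_q: "x \<in> D \<Longrightarrow> le (pr n x) (q x)" using lub_ub[OF q_lub] by blast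
lemma q_le: "x \<in> D \<Longrightarrow> le (q x) x" using lub_least[OF q_lub, of x x] pr_le by blast
lemma q_least: "x \<in> D \<Longrightarrow> u \<in> D \<Longrightarrow> (\<And>n. le (pr n x) u) \<Longrightarrow> le (q x) u"
  using lub_least[OF q_lub] by blast
lemma q_mono: "x \<in> D \<Longrightarrow> y \<in> D \<Longrightarrow> le x y \<Longrightarrow> le (q x) (q y)"
  using q_least[OF _ qD] trans[OF prD prD qD _ pr_le_q] pr_mono by meson

lemma q_cont: "scott_continuous D le q"
  unfolding scott_continuous_def
proof (intro conjI allI impI ballI)
  show "q ` D \<subseteq> D" using qD by blast
  show "\<And>x y. x \<in> D \<Longrightarrow> y \<in> D \<Longrightarrow> le x y \<Longrightarrow> le (q x) (q y)" by (rule q_mono)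
  fix S s assume Ss: "directed D le S \<and> is_lub D le S s"
  then have S: "directed D le S" "is_lub D le S s" by auto
  have SD: "S \<subseteq> D" using dir_sub[OF S(1)] .
  have sD: "s \<in> D" using lub_D[OF S(2)] .
  show "is_lub D le (q ` S) (q s)" unfolding is_lub_def upper_bounds_def
  proof (intro conjI CollectI ballI)
    show "q s \<in> D" using qD[OF sD] .
    fix y assume "y \<in> q ` S"
    then obtain x where x: "x \<in> S" "y = q x" by blast
    then show "le y (q s)" using q_mono[of x s] SD sD lub_ub[OF S(2)] by blast
  next
    fix u assume "u \<in> {u \<in> D. \<forall>x\<in>q ` S. le x u}"
    then have u: "u \<in> D" "\<And>x. x \<in> S \<Longrightarrow> le (q x) u" by auto
    show "le (q s) u"
    proof (rule q_least[OF sD u(1)])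
      fix n
      have l: "is_lub D le (pr n ` S) (pr n s)" using pr_cont[of n] S unfolding scott_continuous_def by blast
      show "le (pr n s) u"
      proof (rule lub_least[OF l u(1)])
        fix y assume "y \<in> pr n ` S"
        then obtain x where x: "x \<in> S" "y = pr n x" by blast
        have xD: "x \<in> D" using x SD by blast
        show "le y u" using trans[OF prD[OF xD] qD[OF xD] u(1) pr_le_q[OF xD] u(2)[OF x(1)]] x by simp
      qed
    qed
  qed
qed

end

context isol begin

lemma qL: assumes xD: "x \<in> D" shows "Lf (q x) \<alpha> = scott_closure D le (q ` Lf x \<alpha>)"
proof -
  let ?S = "range (\<lambda>n. pr n x)"
  have "Lf (q x) \<alpha> = Ls ?S \<alpha>" using lub_iota(1)[OF chain_dir[OF xD] q_lub[OF xD]] .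
  also have "\<dots> = scott_closure D le (\<Union>y\<in>?S. Lf y \<alpha>)" unfolding Ls_def ..
  also have "\<dots> = scott_closure D le (q ` Lf x \<alpha>)"
  proof
    have qLD: "q ` Lf x \<alpha> \<subseteq> D" using qD L_sub[OF xD] by blast
    have cl: "scott_closed D le (scott_closure D le (q ` Lf x \<alpha>))" by (rule cl_sc[OF qLD])
    show "scott_closure D le (\<Union>y\<in>?S. Lf y \<alpha>) \<subseteq> scott_closure D le (q ` Lf x \<alpha>)"
    proof (rule cl_least[OF cl])
      show "(\<Union>y\<in>?S. Lf y \<alpha>) \<subseteq> scott_closure D le (q ` Lf x \<alpha>)"
      proof
        fix z assume "z \<in> (\<Union>y\<in>?S. Lf y \<alpha>)"
        then obtain n where z: "z \<in> Lf (pr n x) \<alpha>" by blast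
        show "z \<in> scott_closure D le (q ` Lf x \<alpha>)"
        proof (cases n)
          case 0 then show ?thesis using z Lf_bt by simp
        next
          case (Suc m)
          then obtain l where l: "z \<in> D" "l \<in> Lf x \<alpha>" "le z (pr m l)" using z pr_L[OF xD] by (auto elim!: downE)
          have lD: "l \<in> D" using l(2) L_sub[OF xD] by blast
          have "le z (q l)" using trans[OF l(1) prD[OF lD] qD[OF lD] l(3) pr_le_q[OF lD]] .
          moreover have "q l \<in> scott_closure D le (q ` Lf x \<alpha>)" using l(2) cl_sup by blast
          ultimately show ?thesis using sc_down[OF cl] l(1) by blast
        qed
      qed
    qed
    have ULD: "(\<Union>y\<in>?S. Lf y \<alpha>) \<subseteq> D" by (rule UL_sub[OF chain_dir[OF xD]])
    have cl2: "scott_closed D le (scott_closure D le (\<Union>y\<in>?S. Lf y \<alpha>))" by (rule cl_sc[OF ULD])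
    show "scott_closure D le (q ` Lf x \<alpha>) \<subseteq> scott_closure D le (\<Union>y\<in>?S. Lf y \<alpha>)"
    proof (rule cl_least[OF cl2])
      show "q ` Lf x \<alpha> \<subseteq> scott_closure D le (\<Union>y\<in>?S. Lf y \<alpha>)"
      proof
        fix z assume "z \<in> q ` Lf x \<alpha>"
        then obtain l where l: "l \<in> Lf x \<alpha>" "z = q l" by blast
        have lD: "l \<in> D" using l(1) L_sub[OF xD] by blast
        have "range (\<lambda>n. pr n l) \<subseteq> scott_closure D le (\<Union>y\<in>?S. Lf y \<alpha>)"
        proof
          fix w assume "w \<in> range (\<lambda>n. pr n l)"
          then obtain n where w: "w = pr n l" by blast
          have "w \<in> Lf (pr (Suc n) x) \<alpha>" unfolding pr_L[OF xD] w using l(1) prD[OF lD] refl[OF prD[OF lD]]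
            by (intro downI) auto
          then have "w \<in> (\<Union>y\<in>?S. Lf y \<alpha>)" by blast
          then show "w \<in> scott_closure D le (\<Union>y\<in>?S. Lf y \<alpha>)" using cl_sup[of "\<Union>y\<in>?S. Lf y \<alpha>"] by blast
        qed
        then show "z \<in> scott_closure D le (\<Union>y\<in>?S. Lf y \<alpha>)"
          using sc_lub[OF cl2 chain_dir[OF lD] _ q_lub[OF lD]] l(2) by simp
      qed
    qed
  qed
  finally show ?thesis .
qed

lemma dec_sc: assumes yD: "y \<in> D" shows "scott_closed D le {u\<in>D. le (pr n u) y}"
proof (rule sc_intro)
  show "{u \<in> D. le (pr n u) y} \<subseteq> D" by blast
  fix a b assume ab: "a \<in> {u \<in> D. le (pr n u) y}" "b \<in> D" "le b a"
  then have "le (pr n b) (pr n a)" using pr_mono by blast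
  then show "b \<in> {u \<in> D. le (pr n u) y}" using trans[OF prD prD yD _ ] ab by blast
next
  fix T t assume T: "directed D le T" "T \<subseteq> {u \<in> D. le (pr n u) y}" "is_lub D le T t"
  have l: "is_lub D le (pr n ` T) (pr n t)" using pr_cont[of n] T unfolding scott_continuous_def by blast
  have "le (pr n t) y" using lub_least[OF l yD] T(2) by blast
  then show "t \<in> {u \<in> D. le (pr n u) y}" using lub_D[OF T(3)] by blast
qed

lemma qU: assumes xD: "x \<in> D" shows "Uf (q x) \<alpha> = up D le (q ` Uf x \<alpha>)"
proof -
  let ?S = "range (\<lambda>n. pr n x)"
  have "Uf (q x) \<alpha> = Us ?S \<alpha>" using lub_iota(2)[OF chain_dir[OF xD] q_lub[OF xD]] .
  also have "\<dots> = (\<Inter>y\<in>?S. Uf y \<alpha>)" unfolding Us_def ..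
  also have "\<dots> = up D le (q ` Uf x \<alpha>)"
  proof
    show "up D le (q ` Uf x \<alpha>) \<subseteq> (\<Inter>y\<in>?S. Uf y \<alpha>)"
    proof
      fix z assume "z \<in> up D le (q ` Uf x \<alpha>)"
      then obtain u where u: "z \<in> D" "u \<in> Uf x \<alpha>" "le (q u) z" by (auto elim!: upE)
      have uD: "u \<in> D" using u(2) U_sub[OF xD] by blast
      have "z \<in> Uf (pr n x) \<alpha>" for n
      proof (cases n)
        case 0 then show ?thesis using Uf_bt u(1) by simp
      next
        case (Suc m)
        have "le (pr m u) z" using trans[OF prD[OF uD] qD[OF uD] u(1) pr_le_q[OF uD] u(3)] .
        then show ?thesis unfolding Suc pr_U[OF xD] using u(1,2) by (intro upI) auto
      qed
      then show "z \<in> (\<Inter>y\<in>?S. Uf y \<alpha>)" by blast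
    qed
    show "(\<Inter>y\<in>?S. Uf y \<alpha>) \<subseteq> up D le (q ` Uf x \<alpha>)"
    proof
      fix y assume y: "y \<in> (\<Inter>y\<in>?S. Uf y \<alpha>)"
      have yD: "y \<in> D" using y Uf_bt[of \<alpha>] by (metis INT_iff pr.simps(1) rangeI)
      have yn: "y \<in> up D le (pr n ` Uf x \<alpha>)" for n
        using y pr_U[OF xD, of n \<alpha>] by (metis INT_iff rangeI)
      let ?C = "\<lambda>n. Uf x \<alpha> \<inter> {u\<in>D. le (pr n u) y}"
      have "D \<inter> (\<Inter>n. ?C n) \<noteq> {}"
      proof (rule fip_seq)
        show "lawson_closed D le (?C n)" for n by (rule lc_Int[OF U_lc[OF xD] sc_lc[OF dec_sc[OF yD]]])
        show "?C n \<noteq> {}" for n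
        proof -
          obtain u where "u \<in> Uf x \<alpha>" "le (pr n u) y" using yn[of n] by (auto elim!: upE)
          moreover then have "u \<in> D" using U_sub[OF xD] by blast
          ultimately show ?thesis by blast
        qed
        show "?C (Suc n) \<subseteq> ?C n" for n
        proof
          fix u assume u: "u \<in> ?C (Suc n)"
          then have "u \<in> D" "le (pr (Suc n) u) y" by auto
          then have "le (pr n u) y" using trans[OF prD prD yD pr_chain] by blast
          then show "u \<in> ?C n" using u by blast
        qed
      qed
      then obtain u where u: "u \<in> D" "u \<in> Uf x \<alpha>" "\<And>n. le (pr n u) y" by blast
      have "le (q u) y" using q_least[OF u(1) yD u(3)] .
      then show "y \<in> up D le (q ` Uf x \<alpha>)" using yD u(2) by (intro upI) auto
    qed
  qed
  finally show ?thesis .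
qed

lemma q_fix: assumes xD: "x \<in> D" shows "Phi D le \<iota> q x = q x"
proof -
  have "(\<lambda>\<alpha>. mixed_map D le q (\<iota> x \<alpha>)) = \<iota> (q x)"
  proof
    fix \<alpha>
    have "mixed_map D le q (\<iota> x \<alpha>) = (scott_closure D le (q ` Lf x \<alpha>), up D le (q ` Uf x \<alpha>))"
      unfolding mixed_map_def Lf_def Uf_def by simp
    also have "\<dots> = (Lf (q x) \<alpha>, Uf (q x) \<alpha>)" using qL[OF xD] qU[OF xD] by simp
    also have "\<dots> = \<iota> (q x) \<alpha>" unfolding Lf_def Uf_def by simp
    finally show "mixed_map D le q (\<iota> x \<alpha>) = \<iota> (q x) \<alpha>" .
  qed
  then show ?thesis unfolding Phi_def using j_iota[OF qD[OF xD]] unfolding j_def by simp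
qed

lemma q_id: "x \<in> D \<Longrightarrow> q x = x"
  using minv[OF q_cont q_fix] q_le antisym qD by blast

definition "sim R \<longleftrightarrow> R \<subseteq> D \<times> D \<and> (\<forall>(x,y)\<in>R. \<forall>\<alpha>. (\<forall>x'\<in>Lf x \<alpha>. \<exists>y'\<in>Lf y \<alpha>. (x',y') \<in> R) \<and>
                                          (\<forall>y'\<in>Uf y \<alpha>. \<exists>x'\<in>Uf x \<alpha>. (x',y') \<in> R))"

lemma coind: assumes R: "sim R" and xy: "(x,y) \<in> R" shows "le x y"
proof -
  have RD: "R \<subseteq> D \<times> D" using R unfolding sim_def by blast
  have st: "\<And>x y \<alpha>. (x,y) \<in> R \<Longrightarrow> (\<forall>x'\<in>Lf x \<alpha>. \<exists>y'\<in>Lf y \<alpha>. (x',y') \<in> R) \<and> (\<forall>y'\<in>Uf y \<alpha>. \<exists>x'\<in>Uf x \<alpha>. (x',y') \<in> R)"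
    using R unfolding sim_def by blast
  have "\<forall>(x,y)\<in>R. le (pr n x) (pr n y)" for n
  proof (induction n)
    case 0 then show ?case using refl[OF bt_D] by simp
  next
    case (Suc n)
    show ?case
    proof (intro ballI, clarify)
      fix x y assume xy: "(x,y) \<in> R"
      then have xD: "x \<in> D" and yD: "y \<in> D" using RD by blast+
      have "\<forall>\<alpha>. Lf (pr (Suc n) x) \<alpha> \<subseteq> Lf (pr (Suc n) y) \<alpha> \<and> Uf (pr (Suc n) y) \<alpha> \<subseteq> Uf (pr (Suc n) x) \<alpha>"
      proof
        fix \<alpha>
        have i1: "pr n ` Lf x \<alpha> \<subseteq> D" "pr n ` Lf y \<alpha> \<subseteq> D" "pr n ` Uf x \<alpha> \<subseteq> D" "pr n ` Uf y \<alpha> \<subseteq> D"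
          using L_sub[OF xD] L_sub[OF yD] U_sub[OF xD] U_sub[OF yD] prD by blast+
        have "down D le (pr n ` Lf x \<alpha>) \<subseteq> down D le (pr n ` Lf y \<alpha>)"
        proof (rule down_mono'[OF i1(1,2)])
          fix a assume "a \<in> pr n ` Lf x \<alpha>"
          then obtain x' where x': "x' \<in> Lf x \<alpha>" "a = pr n x'" by blast
          then obtain y' where y': "y' \<in> Lf y \<alpha>" "(x',y') \<in> R" using st[OF xy] by blast
          then have "le a (pr n y')" using Suc.IH x'(2) by blast
          then show "\<exists>b\<in>pr n ` Lf y \<alpha>. le a b" using y'(1) by blast
        qed
        moreover have "up D le (pr n ` Uf y \<alpha>) \<subseteq> up D le (pr n ` Uf x \<alpha>)"
        proof (rule up_mono'[OF i1(3,4)])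
          fix b assume "b \<in> pr n ` Uf y \<alpha>"
          then obtain y' where y': "y' \<in> Uf y \<alpha>" "b = pr n y'" by blast
          then obtain x' where x': "x' \<in> Uf x \<alpha>" "(x',y') \<in> R" using st[OF xy] by blast
          then have "le (pr n x') b" using Suc.IH y'(2) by blast
          then show "\<exists>a\<in>pr n ` Uf x \<alpha>. le a b" using x'(1) by blast
        qed
        ultimately show "Lf (pr (Suc n) x) \<alpha> \<subseteq> Lf (pr (Suc n) y) \<alpha> \<and> Uf (pr (Suc n) y) \<alpha> \<subseteq> Uf (pr (Suc n) x) \<alpha>"
          using pr_L[OF xD] pr_L[OF yD] pr_U[OF xD] pr_U[OF yD] by simp
      qed
      then show "le (pr (Suc n) x) (pr (Suc n) y)" using ord[OF prD[OF xD] prD[OF yD]] by blast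
    qed
  qed
  then have n: "\<And>n. le (pr n x) (pr n y)" using xy by blast
  have xD: "x \<in> D" and yD: "y \<in> D" using xy RD by blast+
  have "le (q x) y" using q_least[OF xD yD] n trans[OF prD[OF xD] prD[OF yD] yD _ pr_le[OF yD]] by blast
  then show ?thesis using q_id[OF xD] by simp
qed

end

context isol begin

lemma fin_P: assumes "\<And>\<alpha>. finite (F \<alpha>)" "\<And>\<alpha>. F \<alpha> \<subseteq> D"
  shows "(\<lambda>\<alpha>. (down D le (F \<alpha>), up D le (F \<alpha>))) \<in> P"
proof (intro CollectI allI)
  fix \<alpha>
  have sc: "scott_closed D le (down D le (F \<alpha>))" by (rule sc_down_fin[OF assms])
  have lc: "lawson_closed D le (up D le (F \<alpha>))" by (rule lc_up_fin[OF assms])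
  have upp: "upper_set D le (up D le (F \<alpha>))" unfolding upper_set_def using up_sub up_up[OF assms(2)] by blast
  have eq: "down D le (F \<alpha>) = down D le (down D le (F \<alpha>) \<inter> up D le (F \<alpha>))"
  proof
    show "down D le (down D le (F \<alpha>) \<inter> up D le (F \<alpha>)) \<subseteq> down D le (F \<alpha>)"
    proof (rule down_mono'[OF _ assms(2)])
      show "down D le (F \<alpha>) \<inter> up D le (F \<alpha>) \<subseteq> D" using down_sub by blast
      fix a assume "a \<in> down D le (F \<alpha>) \<inter> up D le (F \<alpha>)"
      then show "\<exists>b\<in>F \<alpha>. le a b" by (auto elim: downE)
    qed
    show "down D le (F \<alpha>) \<subseteq> down D le (down D le (F \<alpha>) \<inter> up D le (F \<alpha>))"
    proof (rule down_mono'[OF assms(2)])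
      show "down D le (F \<alpha>) \<inter> up D le (F \<alpha>) \<subseteq> D" using down_sub by blast
      fix a assume a: "a \<in> F \<alpha>"
      then have "a \<in> D" using assms(2) by blast
      then have "a \<in> down D le (F \<alpha>) \<inter> up D le (F \<alpha>)" "le a a" using a refl by (auto intro: downI upI)
      then show "\<exists>b\<in>down D le (F \<alpha>) \<inter> up D le (F \<alpha>). le a b" by blast
    qed
  qed
  show "(down D le (F \<alpha>), up D le (F \<alpha>)) \<in> mixed_pd D le" unfolding mixed_pd_def using sc lc upp eq by simp
qed

lemma gen_chain_dir: assumes "\<And>n. f n \<in> D" "\<And>n. le (f n) (f (Suc n))"
  shows "directed D le (range f)" and "\<And>m n. m \<le> n \<Longrightarrow> le (f m) (f n)"
proof -
  show mn: "\<And>m n. m \<le> n \<Longrightarrow> le (f m) (f n)"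
  proof -
    fix m n :: nat assume "m \<le> n"
    then show "le (f m) (f n)"
    proof (induction n)
      case 0 then show ?case using refl[OF assms(1)] by simp
    next
      case (Suc n)
      show ?case
      proof (cases "m = Suc n")
        case True then show ?thesis using refl[OF assms(1)] by simp
      next
        case False then have "le (f m) (f n)" using Suc by simp
        then show ?thesis using trans[OF assms(1) assms(1) assms(1) _ assms(2)] by blast
      qed
    qed
  qed
  show "directed D le (range f)" unfolding directed_def
  proof (intro conjI ballI)
    show "range f \<subseteq> D" using assms(1) by blast
    show "range f \<noteq> {}" by simp
    fix a b assume "a \<in> range f" "b \<in> range f"
    then obtain m n where "a = f m" "b = f n" by blast
    then show "\<exists>z\<in>range f. le a z \<and> le b z" using mn[of m "max m n"] mn[of n "max m n"] by auto
  qed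
qed

definition "succ R s \<alpha> = {s'. (s, \<alpha>, s') \<in> R}"

primrec dn :: "('s \<times> 'act \<times> 's) set \<Rightarrow> nat \<Rightarrow> 's \<Rightarrow> 'd" where
  "dn R 0 s = bt"
| "dn R (Suc n) s = j (\<lambda>\<alpha>. (down D le (dn R n ` succ R s \<alpha>), up D le (dn R n ` succ R s \<alpha>)))"

context
  fixes R :: "('s \<times> 'act \<times> 's) set"
  assumes imf: "\<And>s \<alpha>. finite (succ R s \<alpha>)"
begin

lemma dn_props: "(\<forall>s. dn R n s \<in> D) \<and> (\<forall>s \<alpha>. Lf (dn R (Suc n) s) \<alpha> = down D le (dn R n ` succ R s \<alpha>) \<and>
      Uf (dn R (Suc n) s) \<alpha> = up D le (dn R n ` succ R s \<alpha>))"
proof (induction n)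
  case 0
  have p: "(\<lambda>\<alpha>. (down D le (dn R 0 ` succ R s \<alpha>), up D le (dn R 0 ` succ R s \<alpha>))) \<in> P" for s
    by (rule fin_P) (use imf bt_D in auto)
  show ?case using bt_D Lf_j[OF p] Uf_j[OF p] by simp
next
  case (Suc n)
  have Dn: "dn R n s \<in> D" for s using Suc by blast
  have DSn: "dn R (Suc n) s \<in> D" for s
  proof -
    have "(\<lambda>\<alpha>. (down D le (dn R n ` succ R s \<alpha>), up D le (dn R n ` succ R s \<alpha>))) \<in> P"
      by (rule fin_P) (use imf Dn in auto)
    then show ?thesis by (simp add: j_D)
  qed
  have p: "(\<lambda>\<alpha>. (down D le (dn R (Suc n) ` succ R s \<alpha>), up D le (dn R (Suc n) ` succ R s \<alpha>))) \<in> P" for s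
    by (rule fin_P) (use imf DSn in \<open>auto simp del: dn.simps\<close>)
  show ?case using DSn Lf_j[OF p] Uf_j[OF p] by (simp del: dn.simps) simp
qed

lemma dnD: "dn R n s \<in> D" using dn_props by blast
lemma dnL: "Lf (dn R (Suc n) s) \<alpha> = down D le (dn R n ` succ R s \<alpha>)" using dn_props by blast
lemma dnU: "Uf (dn R (Suc n) s) \<alpha> = up D le (dn R n ` succ R s \<alpha>)" using dn_props by blast

lemma dn_chain: "le (dn R n s) (dn R (Suc n) s)"
proof (induction n arbitrary: s)
  case 0 show ?case unfolding dn.simps(1) by (rule bt_le[OF dnD])
next
  case (Suc n)
  have "\<forall>\<alpha>. Lf (dn R (Suc n) s) \<alpha> \<subseteq> Lf (dn R (Suc (Suc n)) s) \<alpha> \<and> Uf (dn R (Suc (Suc n)) s) \<alpha> \<subseteq> Uf (dn R (Suc n) s) \<alpha>"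
  proof
    fix \<alpha>
    have i1: "dn R n ` succ R s \<alpha> \<subseteq> D" "dn R (Suc n) ` succ R s \<alpha> \<subseteq> D" using dnD by blast+
    have "down D le (dn R n ` succ R s \<alpha>) \<subseteq> down D le (dn R (Suc n) ` succ R s \<alpha>)"
      by (rule down_mono'[OF i1]) (use Suc.IH in blast)
    moreover have "up D le (dn R (Suc n) ` succ R s \<alpha>) \<subseteq> up D le (dn R n ` succ R s \<alpha>)"
      by (rule up_mono'[OF i1]) (use Suc.IH in blast)
    ultimately show "Lf (dn R (Suc n) s) \<alpha> \<subseteq> Lf (dn R (Suc (Suc n)) s) \<alpha> \<and> Uf (dn R (Suc (Suc n)) s) \<alpha> \<subseteq> Uf (dn R (Suc n) s) \<alpha>"
      unfolding dnL dnU by simp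
  qed
  then show ?case using ord[OF dnD dnD] by blast
qed

lemma dn_dir: "directed D le (range (\<lambda>n. dn R n s))"
  using gen_chain_dir(1)[of "\<lambda>n. dn R n s"] dnD dn_chain by blast
lemma dn_mono_n: "m \<le> n \<Longrightarrow> le (dn R m s) (dn R n s)"
  using gen_chain_dir(2)[of "\<lambda>n. dn R n s"] dnD dn_chain by blast

definition "dl s = (SOME d. is_lub D le (range (\<lambda>n. dn R n s)) d)"

lemma dl_lub: "is_lub D le (range (\<lambda>n. dn R n s)) (dl s)"
  unfolding dl_def using lub_ex[OF dn_dir] by (rule someI_ex)
lemma dlD: "dl s \<in> D" using lub_D[OF dl_lub] .
lemma dn_le_dl: "le (dn R n s) (dl s)" using lub_ub[OF dl_lub] by blast

lemma dlL: "Lf (dl s) \<alpha> = down D le (dl ` succ R s \<alpha>)"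
proof -
  let ?S = "range (\<lambda>n. dn R n s)"
  have "Lf (dl s) \<alpha> = scott_closure D le (\<Union>y\<in>?S. Lf y \<alpha>)"
    using lub_iota(1)[OF dn_dir dl_lub] unfolding Ls_def .
  also have "\<dots> = down D le (dl ` succ R s \<alpha>)"
  proof
    have dD: "dl ` succ R s \<alpha> \<subseteq> D" using dlD by blast
    have sc: "scott_closed D le (down D le (dl ` succ R s \<alpha>))" by (rule sc_down_fin[OF _ dD]) (use imf in simp)
    show "scott_closure D le (\<Union>y\<in>?S. Lf y \<alpha>) \<subseteq> down D le (dl ` succ R s \<alpha>)"
    proof (rule cl_least[OF sc], rule)
      fix z assume "z \<in> (\<Union>y\<in>?S. Lf y \<alpha>)"
      then obtain n where z: "z \<in> Lf (dn R n s) \<alpha>" by blast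
      show "z \<in> down D le (dl ` succ R s \<alpha>)"
      proof (cases n)
        case 0 then show ?thesis using z Lf_bt by simp
      next
        case (Suc m)
        then obtain s' where s': "z \<in> D" "s' \<in> succ R s \<alpha>" "le z (dn R m s')" using z dnL by (auto elim!: downE)
        have "le z (dl s')" using trans[OF s'(1) dnD dlD s'(3) dn_le_dl] .
        then show ?thesis using s' by (intro downI) auto
      qed
    qed
    have ULD: "(\<Union>y\<in>?S. Lf y \<alpha>) \<subseteq> D" by (rule UL_sub[OF dn_dir])
    have cl2: "scott_closed D le (scott_closure D le (\<Union>y\<in>?S. Lf y \<alpha>))" by (rule cl_sc[OF ULD])
    show "down D le (dl ` succ R s \<alpha>) \<subseteq> scott_closure D le (\<Union>y\<in>?S. Lf y \<alpha>)"
    proof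
      fix z assume "z \<in> down D le (dl ` succ R s \<alpha>)"
      then obtain s' where z: "z \<in> D" "s' \<in> succ R s \<alpha>" "le z (dl s')" by (auto elim!: downE)
      have "range (\<lambda>n. dn R n s') \<subseteq> scott_closure D le (\<Union>y\<in>?S. Lf y \<alpha>)"
      proof
        fix w assume "w \<in> range (\<lambda>n. dn R n s')"
        then obtain n where w: "w = dn R n s'" by blast
        have "w \<in> Lf (dn R (Suc n) s) \<alpha>" unfolding dnL w using z(2) dnD refl[OF dnD]
          by (intro downI) auto
        then have "w \<in> (\<Union>y\<in>?S. Lf y \<alpha>)" by blast
        then show "w \<in> scott_closure D le (\<Union>y\<in>?S. Lf y \<alpha>)" using cl_sup[of "\<Union>y\<in>?S. Lf y \<alpha>"] by blast
      qed
      then have "dl s' \<in> scott_closure D le (\<Union>y\<in>?S. Lf y \<alpha>)"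
        using sc_lub[OF cl2 dn_dir _ dl_lub] by simp
      then show "z \<in> scott_closure D le (\<Union>y\<in>?S. Lf y \<alpha>)" using sc_down[OF cl2] z by blast
    qed
  qed
  finally show ?thesis .
qed

lemma dlU: "Uf (dl s) \<alpha> = up D le (dl ` succ R s \<alpha>)"
proof -
  let ?S = "range (\<lambda>n. dn R n s)"
  have "Uf (dl s) \<alpha> = (\<Inter>y\<in>?S. Uf y \<alpha>)"
    using lub_iota(2)[OF dn_dir dl_lub] unfolding Us_def .
  also have "\<dots> = up D le (dl ` succ R s \<alpha>)"
  proof
    show "up D le (dl ` succ R s \<alpha>) \<subseteq> (\<Inter>y\<in>?S. Uf y \<alpha>)"
    proof
      fix z assume "z \<in> up D le (dl ` succ R s \<alpha>)"
      then obtain s' where z: "z \<in> D" "s' \<in> succ R s \<alpha>" "le (dl s') z" by (auto elim!: upE)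
      have "z \<in> Uf (dn R n s) \<alpha>" for n
      proof (cases n)
        case 0 then show ?thesis using Uf_bt z(1) by simp
      next
        case (Suc m)
        have "le (dn R m s') z" using trans[OF dnD dlD z(1) dn_le_dl z(3)] .
        then show ?thesis unfolding Suc dnU using z(1,2) by (intro upI) auto
      qed
      then show "z \<in> (\<Inter>y\<in>?S. Uf y \<alpha>)" by blast
    qed
    show "(\<Inter>y\<in>?S. Uf y \<alpha>) \<subseteq> up D le (dl ` succ R s \<alpha>)"
    proof
      fix y assume y: "y \<in> (\<Inter>y\<in>?S. Uf y \<alpha>)"
      have yD: "y \<in> D" using y Uf_bt[of \<alpha>] by (metis INT_iff dn.simps(1) rangeI)
      have yn: "y \<in> up D le (dn R n ` succ R s \<alpha>)" for n
        using y dnU[of n s \<alpha>] by (metis INT_iff rangeI)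
      show "y \<in> up D le (dl ` succ R s \<alpha>)"
      proof (rule ccontr)
        assume ny: "y \<notin> up D le (dl ` succ R s \<alpha>)"
        have "\<forall>s'\<in>succ R s \<alpha>. eventually (\<lambda>m. \<not> le (dn R m s') y) sequentially"
        proof
          fix s' assume s': "s' \<in> succ R s \<alpha>"
          have "\<not> le (dl s') y" using ny s' yD by (auto intro: upI)
          then obtain n where n: "\<not> le (dn R n s') y"
            using lub_least[OF dl_lub yD] by blast
          have "\<not> le (dn R m s') y" if "m \<ge> n" for m
          proof
            assume "le (dn R m s') y"
            then have "le (dn R n s') y" using trans[OF dnD dnD yD dn_mono_n[OF that]] by blast
            then show False using n by simp
          qed
          then have "\<forall>m\<ge>n. \<not> le (dn R m s') y" by blast
          then show "eventually (\<lambda>m. \<not> le (dn R m s') y) sequentially"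
            unfolding eventually_sequentially by (rule exI)
        qed
        then have "eventually (\<lambda>m. \<forall>s'\<in>succ R s \<alpha>. \<not> le (dn R m s') y) sequentially"
          by (rule eventually_ball_finite[OF imf])
        then obtain N where "\<forall>m\<ge>N. \<forall>s'\<in>succ R s \<alpha>. \<not> le (dn R m s') y"
          unfolding eventually_sequentially by (elim exE)
        then have "\<forall>s'\<in>succ R s \<alpha>. \<not> le (dn R N s') y" by simp
        moreover obtain s' where "s' \<in> succ R s \<alpha>" "le (dn R N s') y" using yn[of N] by (auto elim!: upE)
        ultimately show False by blast
      qed
    qed
  qed
  finally show ?thesis .
qed

lemma dl_max: "y \<in> D \<Longrightarrow> le (dl s) y \<Longrightarrow> y = dl s"
proof -
  assume yD: "y \<in> D" and le1: "le (dl s) y"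
  let ?R = "{(y,z). y \<in> D \<and> z \<in> D \<and> (\<exists>s w. w \<in> D \<and> le (dl s) z \<and> le y w \<and> le (dl s) w)}"
  have "sim ?R" unfolding sim_def
  proof (intro conjI)
    show "?R \<subseteq> D \<times> D" by blast
    show "\<forall>(y, z)\<in>?R. \<forall>\<alpha>. (\<forall>x'\<in>Lf y \<alpha>. \<exists>y'\<in>Lf z \<alpha>. (x', y') \<in> ?R) \<and> (\<forall>y'\<in>Uf z \<alpha>. \<exists>x'\<in>Uf y \<alpha>. (x', y') \<in> ?R)"
    proof (clarify, intro allI conjI ballI)
      fix y z s w \<alpha> assume a: "y \<in> D" "z \<in> D" "w \<in> D" "le (dl s) z" "le y w" "le (dl s) w"
      have o1: "\<forall>\<alpha>. Lf (dl s) \<alpha> \<subseteq> Lf z \<alpha> \<and> Uf z \<alpha> \<subseteq> Uf (dl s) \<alpha>" using ord[OF dlD a(2)] a(4) by blast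
      have o2: "\<forall>\<alpha>. Lf y \<alpha> \<subseteq> Lf w \<alpha> \<and> Uf w \<alpha> \<subseteq> Uf y \<alpha>" using ord[OF a(1) a(3)] a(5) by blast
      have o3: "\<forall>\<alpha>. Lf (dl s) \<alpha> \<subseteq> Lf w \<alpha> \<and> Uf w \<alpha> \<subseteq> Uf (dl s) \<alpha>" using ord[OF dlD a(3)] a(6) by blast
      {
        fix y' assume y': "y' \<in> Lf y \<alpha>"
        then have "y' \<in> Lf w \<alpha>" using o2 by blast
        then obtain w' where w': "w' \<in> Lf w \<alpha>" "w' \<in> Uf w \<alpha>" "le y' w'" using L_decomp[OF a(3)] by blast
        have w'D: "w' \<in> D" using w'(1) L_sub[OF a(3)] by blast
        have y'D: "y' \<in> D" using y' L_sub[OF a(1)] by blast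
        have "w' \<in> up D le (dl ` succ R s \<alpha>)" using w'(2) o3 dlU by blast
        then obtain s'' where s'': "s'' \<in> succ R s \<alpha>" "le (dl s'') w'" by (auto elim!: upE)
        have "dl s'' \<in> Lf (dl s) \<alpha>" unfolding dlL using s''(1) dlD refl[OF dlD] by (intro downI) auto
        then have "dl s'' \<in> Lf z \<alpha>" using o1 by blast
        moreover have "(y', dl s'') \<in> ?R" using y'D dlD w'D w'(3) s''(2) refl[OF dlD, of s''] by blast
        ultimately show "\<exists>y''\<in>Lf z \<alpha>. (y', y'') \<in> ?R" by blast
      next
        fix z' assume z': "z' \<in> Uf z \<alpha>"
        have z'D: "z' \<in> D" using z' U_sub[OF a(2)] by blast
        have "z' \<in> up D le (dl ` succ R s \<alpha>)" using z' o1 dlU by blast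
        then obtain s'' where s'': "s'' \<in> succ R s \<alpha>" "le (dl s'') z'" by (auto elim!: upE)
        have "dl s'' \<in> Lf (dl s) \<alpha>" unfolding dlL using s''(1) dlD refl[OF dlD] by (intro downI) auto
        then have "dl s'' \<in> Lf w \<alpha>" using o3 by blast
        then obtain w'' where w'': "w'' \<in> Lf w \<alpha>" "w'' \<in> Uf w \<alpha>" "le (dl s'') w''" using L_decomp[OF a(3)] by blast
        have w''D: "w'' \<in> D" using w''(1) L_sub[OF a(3)] by blast
        have "w'' \<in> Uf y \<alpha>" using w''(2) o2 by blast
        moreover have "(w'', z') \<in> ?R" using w''D z'D s''(2) w''(3) refl[OF w''D] by blast
        ultimately show "\<exists>x'\<in>Uf y \<alpha>. (x', z') \<in> ?R" by blast
      }
    qed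
  qed
  moreover have "(y, dl s) \<in> ?R" using yD dlD le1 refl[OF yD] refl[OF dlD, of s] by blast
  ultimately have "le y (dl s)" by (rule coind)
  then show "y = dl s" using antisym[OF yD dlD] le1 by blast
qed

end
end

context isol begin

lemma mem_f1: "(a, \<alpha>, b) \<in> (\<lambda>(s,a,t). (Inl s, a, Inl t)) ` X \<longleftrightarrow> (\<exists>s t. a = Inl s \<and> b = Inl t \<and> (s,\<alpha>,t) \<in> X)"
  by force
lemma mem_f2: "(a, \<alpha>, b) \<in> (\<lambda>(s,a,t). (Inr s, a, Inr t)) ` X \<longleftrightarrow> (\<exists>s t. a = Inr s \<and> b = Inr t \<and> (s,\<alpha>,t) \<in> X)"
  by force

lemma dsys_eq: "dsys D \<iota> = (D, {(d,\<alpha>,d'). d \<in> D \<and> d' \<in> Lf d \<alpha>}, {(d,\<alpha>,d'). d \<in> D \<and> d' \<in> Uf d \<alpha>})"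
  unfolding dsys_def Lf_def Uf_def ..

lemma refinementD:
  assumes "refinement (\<Sigma>, Ra, Rc) Q" "(s,t) \<in> Q"
  shows "Q \<subseteq> \<Sigma> \<times> \<Sigma>"
    "\<And>s'. (s,\<alpha>,s') \<in> Ra \<Longrightarrow> \<exists>t'. (t,\<alpha>,t') \<in> Ra \<and> (s',t') \<in> Q"
    "\<And>t'. (t,\<alpha>,t') \<in> Rc \<Longrightarrow> \<exists>s'. (s,\<alpha>,s') \<in> Rc \<and> (s',t') \<in> Q"
  using assms unfolding refinement_def by auto

lemma ref_le:
  fixes M :: "('s,'act) mts"
  assumes r1: "refines (dsys D \<iota>) x M s" and r2: "refines M s (dsys D \<iota>) y"
  shows "le x y"
proof -
  obtain \<Sigma>M RaM RcM where M: "M = (\<Sigma>M, RaM, RcM)" by (cases M)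
  let ?Ra = "{(d,\<alpha>,d'). d \<in> D \<and> d' \<in> Lf d \<alpha>}" and ?Rc = "{(d,\<alpha>,d'). d \<in> D \<and> d' \<in> Uf d \<alpha>}"
  let ?U1 = "(Inl ` D \<union> Inr ` \<Sigma>M,
      (\<lambda>(s,a,t). (Inl s, a, Inl t)) ` ?Ra \<union> (\<lambda>(s,a,t). (Inr s, a, Inr t)) ` RaM,
      (\<lambda>(s,a,t). (Inl s, a, Inl t)) ` ?Rc \<union> (\<lambda>(s,a,t). (Inr s, a, Inr t)) ` RcM)"
  let ?U2 = "(Inl ` \<Sigma>M \<union> Inr ` D,
      (\<lambda>(s,a,t). (Inl s, a, Inl t)) ` RaM \<union> (\<lambda>(s,a,t). (Inr s, a, Inr t)) ` ?Ra,
      (\<lambda>(s,a,t). (Inl s, a, Inl t)) ` RcM \<union> (\<lambda>(s,a,t). (Inr s, a, Inr t)) ` ?Rc)"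
  have u1: "dunion (dsys D \<iota>) M = ?U1" unfolding dsys_eq M dunion_def by simp
  have u2: "dunion M (dsys D \<iota>) = ?U2" unfolding dsys_eq M dunion_def by simp
  obtain Q1 where Q1: "refinement ?U1 Q1" "(Inl x, Inr s) \<in> Q1" using r1 u1 unfolding refines_def by auto
  obtain Q2 where Q2: "refinement ?U2 Q2" "(Inl s, Inr y) \<in> Q2" using r2 u2 unfolding refines_def by auto
  let ?R = "{(x,y). \<exists>s. (Inl x, Inr s) \<in> Q1 \<and> (Inl s, Inr y) \<in> Q2}"
  have "sim ?R" unfolding sim_def
  proof (intro conjI)
    show "?R \<subseteq> D \<times> D"
    proof clarify
      fix a b s assume a: "(Inl a, Inr s) \<in> Q1" "(Inl s, Inr b) \<in> Q2"
      have "Inl a \<in> Inl ` D \<union> Inr ` \<Sigma>M" using refinementD(1)[OF Q1(1) a(1)] a(1) by blast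
      moreover have "Inr b \<in> Inl ` \<Sigma>M \<union> Inr ` D" using refinementD(1)[OF Q2(1) a(2)] a(2) by blast
      ultimately show "a \<in> D \<and> b \<in> D" by blast
    qed
    show "\<forall>(x, y)\<in>?R. \<forall>\<alpha>. (\<forall>x'\<in>Lf x \<alpha>. \<exists>y'\<in>Lf y \<alpha>. (x', y') \<in> ?R) \<and> (\<forall>y'\<in>Uf y \<alpha>. \<exists>x'\<in>Uf x \<alpha>. (x', y') \<in> ?R)"
    proof (clarify, intro allI conjI ballI)
      fix a b s \<alpha> assume ab: "(Inl a, Inr s) \<in> Q1" "(Inl s, Inr b) \<in> Q2"
      have aD: "a \<in> D" using refinementD(1)[OF Q1(1) ab(1)] ab(1) by blast
      have bD: "b \<in> D" using refinementD(1)[OF Q2(1) ab(2)] ab(2) by blast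
      {
        fix a' assume a': "a' \<in> Lf a \<alpha>"
        have "(Inl a, \<alpha>, Inl a') \<in> (\<lambda>(s,a,t). (Inl s, a, Inl t)) ` ?Ra" using a' aD by (force simp: mem_f1)
        then obtain t' where t': "(Inr s, \<alpha>, t') \<in> (\<lambda>(s,a,t). (Inl s, a, Inl t)) ` ?Ra \<union> (\<lambda>(s,a,t). (Inr s, a, Inr t)) ` RaM"
          "(Inl a', t') \<in> Q1" using refinementD(2)[OF Q1(1) ab(1), of \<alpha> "Inl a'"] by blast
        then obtain s' where s': "t' = Inr s'" "(s, \<alpha>, s') \<in> RaM" by (auto simp: mem_f1 mem_f2)
        have "(Inl s, \<alpha>, Inl s') \<in> (\<lambda>(s,a,t). (Inl s, a, Inl t)) ` RaM" using s'(2) by (force simp: mem_f1)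
        then obtain t'' where t'': "(Inr b, \<alpha>, t'') \<in> (\<lambda>(s,a,t). (Inl s, a, Inl t)) ` RaM \<union> (\<lambda>(s,a,t). (Inr s, a, Inr t)) ` ?Ra"
          "(Inl s', t'') \<in> Q2" using refinementD(2)[OF Q2(1) ab(2), of \<alpha> "Inl s'"] by blast
        then obtain b' where b': "t'' = Inr b'" "b' \<in> Lf b \<alpha>" by (auto simp: mem_f1 mem_f2)
        have "(a', b') \<in> ?R" using t'(2) t''(2) s'(1) b'(1) by blast
        then show "\<exists>y'\<in>Lf b \<alpha>. (a', y') \<in> ?R" using b'(2) by blast
      next
        fix b' assume b': "b' \<in> Uf b \<alpha>"
        have "(Inr b, \<alpha>, Inr b') \<in> (\<lambda>(s,a,t). (Inr s, a, Inr t)) ` ?Rc" using b' bD by (force simp: mem_f2)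
        then obtain s' where s': "(Inl s, \<alpha>, s') \<in> (\<lambda>(s,a,t). (Inl s, a, Inl t)) ` RcM \<union> (\<lambda>(s,a,t). (Inr s, a, Inr t)) ` ?Rc"
          "(s', Inr b') \<in> Q2" using refinementD(3)[OF Q2(1) ab(2), of \<alpha> "Inr b'"] by blast
        then obtain s'' where s'': "s' = Inl s''" "(s, \<alpha>, s'') \<in> RcM" by (auto simp: mem_f1 mem_f2)
        have "(Inr s, \<alpha>, Inr s'') \<in> (\<lambda>(s,a,t). (Inr s, a, Inr t)) ` RcM" using s''(2) by (force simp: mem_f2)
        then obtain x' where x': "(Inl a, \<alpha>, x') \<in> (\<lambda>(s,a,t). (Inl s, a, Inl t)) ` ?Rc \<union> (\<lambda>(s,a,t). (Inr s, a, Inr t)) ` RcM"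
          "(x', Inr s'') \<in> Q1" using refinementD(3)[OF Q1(1) ab(1), of \<alpha> "Inr s''"] by blast
        then obtain a' where a': "x' = Inl a'" "a' \<in> Uf a \<alpha>" by (auto simp: mem_f1 mem_f2)
        have "(a', b') \<in> ?R" using x'(2) s'(2) s''(1) a'(1) by blast
        then show "\<exists>x'\<in>Uf a \<alpha>. (x', b') \<in> ?R" using a'(2) by blast
      }
    qed
  qed
  moreover have "(x, y) \<in> ?R" using Q1(2) Q2(2) by blast
  ultimately show ?thesis by (rule coind)
qed

lemma ref_D: "refines (dsys D \<iota>) x M s \<Longrightarrow> x \<in> D"
proof -
  assume r: "refines (dsys D \<iota>) x M s"
  obtain \<Sigma>M RaM RcM where M: "M = (\<Sigma>M, RaM, RcM)" by (cases M)
  obtain Q where Q: "refinement (dunion (dsys D \<iota>) M) Q" "(Inl x, Inr s) \<in> Q" using r unfolding refines_def by blast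
  have "Q \<subseteq> (Inl ` D \<union> Inr ` \<Sigma>M) \<times> (Inl ` D \<union> Inr ` \<Sigma>M)"
    using Q(1) unfolding dunion_def dsys_def M refinement_def by simp
  then show "x \<in> D" using Q(2) by blast
qed

lemma ref_unique: "ref_equiv (dsys D \<iota>) d M i \<Longrightarrow> ref_equiv (dsys D \<iota>) d' M i \<Longrightarrow> d = d'"
  unfolding ref_equiv_def using ref_le antisym ref_D by metis

end

context isol begin

lemma refinementI:
  assumes "Q \<subseteq> \<Sigma> \<times> \<Sigma>"
    and "\<And>s t \<alpha> s'. (s,t) \<in> Q \<Longrightarrow> (s,\<alpha>,s') \<in> Ra \<Longrightarrow> \<exists>t'. (t,\<alpha>,t') \<in> Ra \<and> (s',t') \<in> Q"
    and "\<And>s t \<alpha> t'. (s,t) \<in> Q \<Longrightarrow> (t,\<alpha>,t') \<in> Rc \<Longrightarrow> \<exists>s'. (s,\<alpha>,s') \<in> Rc \<and> (s',t') \<in> Q"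
  shows "refinement (\<Sigma>, Ra, Rc) Q"
  unfolding refinement_def using assms by auto

lemma imf_lts: "image_finite (lts \<Sigma> R) \<Longrightarrow> finite (succ R s \<alpha>)"
  unfolding image_finite_def lts_def succ_def by simp

lemma lts_ref:
  fixes R :: "('s \<times> 'act \<times> 's) set"
  assumes wf: "lts_wf \<Sigma> R" and imf: "image_finite (lts \<Sigma> R)" and l: "l \<in> \<Sigma>"
  shows "ref_equiv (dsys D \<iota>) (dl R l) (lts \<Sigma> R) l"
proof -
  have fin: "\<And>s \<alpha>. finite (succ R s \<alpha>)" using imf_lts[OF imf] .
  have wf': "\<And>s \<alpha> s'. (s,\<alpha>,s') \<in> R \<Longrightarrow> s \<in> \<Sigma> \<and> s' \<in> \<Sigma>" using wf unfolding lts_wf_def by blast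
  note dlD' = dlD[OF fin] and dlL' = dlL[OF fin] and dlU' = dlU[OF fin]
  let ?Ra = "{(d,\<alpha>,d'). d \<in> D \<and> d' \<in> Lf d \<alpha>}" and ?Rc = "{(d,\<alpha>,d'). d \<in> D \<and> d' \<in> Uf d \<alpha>}"
  have u1: "dunion (dsys D \<iota>) (lts \<Sigma> R) = (Inl ` D \<union> Inr ` \<Sigma>,
      (\<lambda>(s,a,t). (Inl s, a, Inl t)) ` ?Ra \<union> (\<lambda>(s,a,t). (Inr s, a, Inr t)) ` R,
      (\<lambda>(s,a,t). (Inl s, a, Inl t)) ` ?Rc \<union> (\<lambda>(s,a,t). (Inr s, a, Inr t)) ` R)"
    unfolding dsys_eq lts_def dunion_def by simp
  have u2: "dunion (lts \<Sigma> R) (dsys D \<iota>) = (Inl ` \<Sigma> \<union> Inr ` D,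
      (\<lambda>(s,a,t). (Inl s, a, Inl t)) ` R \<union> (\<lambda>(s,a,t). (Inr s, a, Inr t)) ` ?Ra,
      (\<lambda>(s,a,t). (Inl s, a, Inl t)) ` R \<union> (\<lambda>(s,a,t). (Inr s, a, Inr t)) ` ?Rc)"
    unfolding dsys_eq lts_def dunion_def by simp
  let ?Q1 = "{(Inl x, Inr s) | x s. s \<in> \<Sigma> \<and> x \<in> D \<and> le x (dl R s)}"
  have rf1: "refinement (dunion (dsys D \<iota>) (lts \<Sigma> R)) ?Q1"
    unfolding u1
  proof (rule refinementI)
    show "?Q1 \<subseteq> (Inl ` D \<union> Inr ` \<Sigma>) \<times> (Inl ` D \<union> Inr ` \<Sigma>)" by blast
  next
    fix p t p' :: "'d + 's" and \<alpha> assume a: "(p, t) \<in> ?Q1"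
      "(p, \<alpha>, p') \<in> (\<lambda>(s,a,t). (Inl s, a, Inl t)) ` ?Ra \<union> (\<lambda>(s,a,t). (Inr s, a, Inr t)) ` R"
    then obtain x s where xs: "p = Inl x" "t = Inr s" "s \<in> \<Sigma>" "x \<in> D" "le x (dl R s)" by blast
    obtain x' where x': "p' = Inl x'" "x' \<in> Lf x \<alpha>" using a(2) xs(1) by (auto simp: mem_f1 mem_f2)
    have "x' \<in> Lf (dl R s) \<alpha>" using x'(2) ord[OF xs(4) dlD'] xs(5) by blast
    then obtain s' where s': "x' \<in> D" "s' \<in> succ R s \<alpha>" "le x' (dl R s')" unfolding dlL' by (auto elim!: downE)
    have "(s,\<alpha>,s') \<in> R" "s' \<in> \<Sigma>" using s'(2) wf' unfolding succ_def by auto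
    then have h1: "(t, \<alpha>, Inr s') \<in> (\<lambda>(s,a,t). (Inl s, a, Inl t)) ` ?Ra \<union> (\<lambda>(s,a,t). (Inr s, a, Inr t)) ` R"
      and h2: "(p', Inr s') \<in> ?Q1" using xs(2) x'(1) s' by (force simp: mem_f2)+
    show "\<exists>t'. (t, \<alpha>, t') \<in> (\<lambda>(s,a,t). (Inl s, a, Inl t)) ` ?Ra \<union> (\<lambda>(s,a,t). (Inr s, a, Inr t)) ` R \<and> (p', t') \<in> ?Q1"
      by (rule exI[of _ "Inr s'"]) (rule conjI[OF h1 h2])
  next
    fix p t t' :: "'d + 's" and \<alpha> assume a: "(p, t) \<in> ?Q1"
      "(t, \<alpha>, t') \<in> (\<lambda>(s,a,t). (Inl s, a, Inl t)) ` ?Rc \<union> (\<lambda>(s,a,t). (Inr s, a, Inr t)) ` R"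
    then obtain x s where xs: "p = Inl x" "t = Inr s" "s \<in> \<Sigma>" "x \<in> D" "le x (dl R s)" by blast
    obtain s' where s': "t' = Inr s'" "(s, \<alpha>, s') \<in> R" using a(2) xs(2) by (auto simp: mem_f1 mem_f2)
    have s'S: "s' \<in> \<Sigma>" using wf' s'(2) by blast
    have "dl R s' \<in> Uf (dl R s) \<alpha>" unfolding dlU' using s'(2) dlD' refl[OF dlD'] unfolding succ_def
      by (intro upI) auto
    then have "dl R s' \<in> Uf x \<alpha>" using ord[OF xs(4) dlD'] xs(5) by blast
    then have h1: "(p, \<alpha>, Inl (dl R s')) \<in> (\<lambda>(s,a,t). (Inl s, a, Inl t)) ` ?Rc \<union> (\<lambda>(s,a,t). (Inr s, a, Inr t)) ` R"
      and h2: "(Inl (dl R s'), t') \<in> ?Q1" using xs s'(1) s'S dlD' refl[OF dlD'] by (force simp: mem_f1)+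
    show "\<exists>s'. (p, \<alpha>, s') \<in> (\<lambda>(s,a,t). (Inl s, a, Inl t)) ` ?Rc \<union> (\<lambda>(s,a,t). (Inr s, a, Inr t)) ` R \<and> (s', t') \<in> ?Q1"
      by (rule exI[of _ "Inl (dl R s')"]) (rule conjI[OF h1 h2])
  qed
  have m1: "(Inl (dl R l), Inr l) \<in> ?Q1" using l dlD' refl[OF dlD'] by blast
  have r1: "refines (dsys D \<iota>) (dl R l) (lts \<Sigma> R) l" unfolding refines_def
    by (rule exI[of _ ?Q1], rule conjI[OF rf1 m1])
  let ?Q2 = "{(Inl s, Inr x) | x s. s \<in> \<Sigma> \<and> x \<in> D \<and> le (dl R s) x}"
  have rf2: "refinement (dunion (lts \<Sigma> R) (dsys D \<iota>)) ?Q2"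
    unfolding u2
  proof (rule refinementI)
    show "?Q2 \<subseteq> (Inl ` \<Sigma> \<union> Inr ` D) \<times> (Inl ` \<Sigma> \<union> Inr ` D)" by blast
  next
    fix p t p' :: "'s + 'd" and \<alpha> assume a: "(p, t) \<in> ?Q2"
      "(p, \<alpha>, p') \<in> (\<lambda>(s,a,t). (Inl s, a, Inl t)) ` R \<union> (\<lambda>(s,a,t). (Inr s, a, Inr t)) ` ?Ra"
    then obtain x s where xs: "p = Inl s" "t = Inr x" "s \<in> \<Sigma>" "x \<in> D" "le (dl R s) x" by blast
    obtain s' where s': "p' = Inl s'" "(s, \<alpha>, s') \<in> R" using a(2) xs(1) by (auto simp: mem_f1 mem_f2)
    have s'S: "s' \<in> \<Sigma>" using wf' s'(2) by blast
    have "dl R s' \<in> Lf (dl R s) \<alpha>" unfolding dlL' using s'(2) dlD' refl[OF dlD'] unfolding succ_def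
      by (intro downI) auto
    then have "dl R s' \<in> Lf x \<alpha>" using ord[OF dlD' xs(4)] xs(5) by blast
    then have h1: "(t, \<alpha>, Inr (dl R s')) \<in> (\<lambda>(s,a,t). (Inl s, a, Inl t)) ` R \<union> (\<lambda>(s,a,t). (Inr s, a, Inr t)) ` ?Ra"
      and h2: "(p', Inr (dl R s')) \<in> ?Q2" using xs s'(1) s'S dlD' refl[OF dlD'] by (force simp: mem_f2)+
    show "\<exists>t'. (t, \<alpha>, t') \<in> (\<lambda>(s,a,t). (Inl s, a, Inl t)) ` R \<union> (\<lambda>(s,a,t). (Inr s, a, Inr t)) ` ?Ra \<and> (p', t') \<in> ?Q2"
      by (rule exI[of _ "Inr (dl R s')"]) (rule conjI[OF h1 h2])
  next
    fix p t t' :: "'s + 'd" and \<alpha> assume a: "(p, t) \<in> ?Q2"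
      "(t, \<alpha>, t') \<in> (\<lambda>(s,a,t). (Inl s, a, Inl t)) ` R \<union> (\<lambda>(s,a,t). (Inr s, a, Inr t)) ` ?Rc"
    then obtain x s where xs: "p = Inl s" "t = Inr x" "s \<in> \<Sigma>" "x \<in> D" "le (dl R s) x" by blast
    obtain x' where x': "t' = Inr x'" "x' \<in> Uf x \<alpha>" using a(2) xs(2) by (auto simp: mem_f1 mem_f2)
    have "x' \<in> Uf (dl R s) \<alpha>" using x'(2) ord[OF dlD' xs(4)] xs(5) by blast
    then obtain s' where s': "x' \<in> D" "s' \<in> succ R s \<alpha>" "le (dl R s') x'" unfolding dlU' by (auto elim!: upE)
    have "(s,\<alpha>,s') \<in> R" "s' \<in> \<Sigma>" using s'(2) wf' unfolding succ_def by auto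
    then have h1: "(p, \<alpha>, Inl s') \<in> (\<lambda>(s,a,t). (Inl s, a, Inl t)) ` R \<union> (\<lambda>(s,a,t). (Inr s, a, Inr t)) ` ?Rc"
      and h2: "(Inl s', t') \<in> ?Q2" using xs(1) x'(1) s' by (force simp: mem_f1)+
    show "\<exists>s'. (p, \<alpha>, s') \<in> (\<lambda>(s,a,t). (Inl s, a, Inl t)) ` R \<union> (\<lambda>(s,a,t). (Inr s, a, Inr t)) ` ?Rc \<and> (s', t') \<in> ?Q2"
      by (rule exI[of _ "Inl s'"]) (rule conjI[OF h1 h2])
  qed
  have m2: "(Inl l, Inr (dl R l)) \<in> ?Q2" using l dlD' refl[OF dlD'] by blast
  have r2: "refines (lts \<Sigma> R) l (dsys D \<iota>) (dl R l)" unfolding refines_def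
    by (rule exI[of _ ?Q2], rule conjI[OF rf2 m2])
  show ?thesis unfolding ref_equiv_def using r1 r2 by (rule conjI)
qed

lemma bracket_lts:
  fixes R :: "('s \<times> 'act \<times> 's) set"
  assumes wf: "lts_wf \<Sigma> R" and imf: "image_finite (lts \<Sigma> R)" and l: "l \<in> \<Sigma>"
  shows "bracket D \<iota> (lts \<Sigma> R) l = dl R l"
  unfolding bracket_def
proof (rule the_equality)
  show "dl R l \<in> D \<and> ref_equiv (dsys D \<iota>) (dl R l) (lts \<Sigma> R) l"
    using dlD[OF imf_lts[OF imf]] lts_ref[OF assms] by (rule conjI)
  fix d assume "d \<in> D \<and> ref_equiv (dsys D \<iota>) d (lts \<Sigma> R) l"
  then have "ref_equiv (dsys D \<iota>) d (lts \<Sigma> R) l" by (rule conjunct2)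
  then show "d = dl R l" using lts_ref[OF assms] by (rule ref_unique)
qed

lemma bracket_max:
  fixes R :: "('s \<times> 'act \<times> 's) set"
  assumes wf: "lts_wf \<Sigma> R" and imf: "image_finite (lts \<Sigma> R)" and l: "l \<in> \<Sigma>"
  shows "bracket D \<iota> (lts \<Sigma> R) l \<in> maximals D le"
  unfolding bracket_lts[OF assms] maximals_def
proof (intro CollectI conjI ballI impI)
  show "dl R l \<in> D" using dlD[OF imf_lts[OF imf]] .
  fix y assume "y \<in> D" "le (dl R l) y"
  then show "y = dl R l" using dl_max[OF imf_lts[OF imf]] by blast
qed

end

context isol begin

definition "S0 = {(n, c) | n c. c \<in> pr n ` D}"
definition "R0 = {((Suc n, c), \<alpha>, (n, c')) | n c \<alpha> c'. c \<in> pr (Suc n) ` D \<and> c' \<in> pr n ` D \<and> c' \<in> Lf c \<alpha> \<and> c' \<in> Uf c \<alpha>}"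

lemma S0_countable: "countable S0"
proof -
  have "S0 = (\<Union>n\<in>UNIV. (\<lambda>c. (n, c)) ` pr n ` D)" unfolding S0_def by blast
  moreover have "countable ((\<lambda>c. (n, c)) ` pr n ` D)" for n
    using pr_good[of n] unfolding good_def by (intro countable_finite) simp
  ultimately show ?thesis by simp
qed

lemma R0_S0: "(a, \<alpha>, b) \<in> R0 \<Longrightarrow> a \<in> S0 \<and> b \<in> S0"
  unfolding R0_def S0_def by blast

lemma R0_fin: "finite {b. (a, \<alpha>, b) \<in> R0}"
proof -
  have "{b. (a, \<alpha>, b) \<in> R0} \<subseteq> (\<lambda>c. (fst a - 1, c)) ` pr (fst a - 1) ` D" unfolding R0_def by force
  moreover have "finite ((\<lambda>c. (fst a - 1, c)) ` pr (fst a - 1) ` D)"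
    using pr_good[of "fst a - 1"] unfolding good_def by simp
  ultimately show ?thesis by (rule finite_subset)
qed

lemma density:
  fixes U :: "'d set"
  assumes inf: "infinite (UNIV :: 's set)" and so: "scott_open D le U" and m: "m \<in> U" "m \<in> D"
  shows "\<exists>(\<Sigma> :: 's set) R l. lts_wf \<Sigma> R \<and> l \<in> \<Sigma> \<and> image_finite (lts \<Sigma> R) \<and> bracket D \<iota> (lts \<Sigma> R) l \<in> U"
proof -
  obtain g :: "nat \<times> 'd \<Rightarrow> nat" where g: "inj_on g S0" using S0_countable by (rule countableE)
  obtain f :: "nat \<Rightarrow> 's" where f: "inj f" using infinite_countable_subset[OF inf] by blast
  define h where "h = f \<circ> g"
  have h: "inj_on h S0" unfolding h_def using g f by (simp add: comp_inj_on inj_on_subset)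
  define \<Sigma> where "\<Sigma> = h ` S0"
  define R :: "('s \<times> 'act \<times> 's) set" where "R = {(h a, \<alpha>, h b) | a \<alpha> b. (a, \<alpha>, b) \<in> R0}"
  have succ_h: "succ R (h a) \<alpha> = h ` {b. (a, \<alpha>, b) \<in> R0}" if a: "a \<in> S0" for a \<alpha>
  proof
    show "succ R (h a) \<alpha> \<subseteq> h ` {b. (a, \<alpha>, b) \<in> R0}"
    proof
      fix s' assume "s' \<in> succ R (h a) \<alpha>"
      then obtain a' b where ab: "h a = h a'" "s' = h b" "(a', \<alpha>, b) \<in> R0" unfolding succ_def R_def by blast
      have "a' \<in> S0" using R0_S0[OF ab(3)] by blast
      then have "a' = a" using inj_onD[OF h ab(1)] a by simp
      then show "s' \<in> h ` {b. (a, \<alpha>, b) \<in> R0}" using ab by blast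
    qed
    show "h ` {b. (a, \<alpha>, b) \<in> R0} \<subseteq> succ R (h a) \<alpha>" unfolding succ_def R_def by blast
  qed
  have fin: "finite (succ R s \<alpha>)" for s \<alpha>
  proof (cases "\<exists>a\<in>S0. s = h a")
    case True
    then obtain a where "a \<in> S0" "s = h a" by blast
    then show ?thesis using succ_h R0_fin by simp
  next
    case False
    then have "succ R s \<alpha> = {}" unfolding succ_def R_def using R0_S0 by blast
    then show ?thesis by simp
  qed
  have imf: "image_finite (lts \<Sigma> R)" unfolding image_finite_def lts_def using fin unfolding succ_def by simp
  have wf: "lts_wf \<Sigma> R" unfolding lts_wf_def \<Sigma>_def R_def using R0_S0 by blast
  note dlD' = dlD[OF fin] and dlL' = dlL[OF fin] and dlU' = dlU[OF fin]
  have main: "\<forall>c\<in>pr n ` D. le c (dl R (h (n, c)))" for n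
  proof (induction n)
    case 0
    show ?case using bt_le[OF dlD'] by simp
  next
    case (Suc n)
    show ?case
    proof
      fix c assume "c \<in> pr (Suc n) ` D"
      then obtain x where x: "x \<in> D" "c = pr (Suc n) x" by blast
      have cD: "c \<in> D" using prD[OF x(1), of "Suc n"] x(2) by (simp del: pr.simps)
      have cS: "(Suc n, c) \<in> S0" unfolding S0_def using x by blast
      have sc: "succ R (h (Suc n, c)) \<alpha> = h ` (\<lambda>c'. (n, c')) ` (pr n ` D \<inter> Lf c \<alpha> \<inter> Uf c \<alpha>)" for \<alpha>
      proof -
        have "{b. ((Suc n, c), \<alpha>, b) \<in> R0} = (\<lambda>c'. (n, c')) ` (pr n ` D \<inter> Lf c \<alpha> \<inter> Uf c \<alpha>)"
          unfolding R0_def using x by blast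
        then show ?thesis using succ_h[OF cS] by simp
      qed
      let ?d = "dl R (h (Suc n, c))"
      have "\<forall>\<alpha>. Lf c \<alpha> \<subseteq> Lf ?d \<alpha> \<and> Uf ?d \<alpha> \<subseteq> Uf c \<alpha>"
      proof
        fix \<alpha>
        have "Lf c \<alpha> \<subseteq> Lf ?d \<alpha>"
        proof
          fix y assume "y \<in> Lf c \<alpha>"
          then have "y \<in> down D le (pr n ` Lf x \<alpha>)" using pr_L[OF x(1)] x(2) by simp
          then obtain l where l: "y \<in> D" "l \<in> Lf x \<alpha>" "le y (pr n l)" by (auto elim!: downE)
          obtain l' where l': "l' \<in> Lf x \<alpha>" "l' \<in> Uf x \<alpha>" "le l l'" using L_decomp[OF x(1) l(2)] by blast
          have lD: "l \<in> D" "l' \<in> D" using l(2) l'(1) L_sub[OF x(1)] by blast+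
          let ?c' = "pr n l'"
          have c'D: "?c' \<in> D" using prD[OF lD(2)] .
          have "?c' \<in> Lf c \<alpha>" using pr_L[OF x(1)] x(2) l'(1) c'D refl[OF c'D] by (auto intro: downI)
          moreover have "?c' \<in> Uf c \<alpha>" using pr_U[OF x(1)] x(2) l'(2) c'D refl[OF c'D] by (auto intro: upI)
          moreover have "?c' \<in> pr n ` D" using lD by blast
          ultimately have c'in: "h (n, ?c') \<in> succ R (h (Suc n, c)) \<alpha>" unfolding sc by blast
          have "le y ?c'" using trans[OF l(1) prD[OF lD(1)] c'D l(3) pr_mono[OF lD l'(3)]] .
          moreover have "le ?c' (dl R (h (n, ?c')))" using Suc.IH lD(2) by blast
          ultimately have "le y (dl R (h (n, ?c')))" using trans[OF l(1) c'D dlD'] by blast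
          then show "y \<in> Lf ?d \<alpha>" unfolding dlL' using l(1) c'in by (intro downI) auto
        qed
        moreover have "Uf ?d \<alpha> \<subseteq> Uf c \<alpha>"
        proof
          fix z assume "z \<in> Uf ?d \<alpha>"
          then obtain s' where z: "z \<in> D" "s' \<in> succ R (h (Suc n, c)) \<alpha>" "le (dl R s') z"
            unfolding dlU' by (auto elim!: upE)
          then obtain c' where c': "c' \<in> pr n ` D" "c' \<in> Lf c \<alpha>" "c' \<in> Uf c \<alpha>" "s' = h (n, c')"
            unfolding sc by blast
          have c'D: "c' \<in> D" using c'(1) prD by blast
          have "le c' (dl R s')" using Suc.IH c'(1) c'(4) by blast
          then have "le c' z" using trans[OF c'D dlD' z(1) _ z(3)] by blast
          then show "z \<in> Uf c \<alpha>" using U_upD[OF cD c'(3) z(1)] by blast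
        qed
        ultimately show "Lf c \<alpha> \<subseteq> Lf ?d \<alpha> \<and> Uf ?d \<alpha> \<subseteq> Uf c \<alpha>" by blast
      qed
      then show "le c ?d" using ord[OF cD dlD'] by blast
    qed
  qed
  have eqU: "U = up D le (U \<inter> K)" using so unfolding so_iff by blast
  obtain k where k: "k \<in> U \<inter> K" "le k m" using m eqU by (auto elim: upE)
  obtain n where n: "le k (pr n m)"
  proof -
    have "le k (q m)" using q_id[OF m(2)] k(2) by simp
    then obtain y where "y \<in> range (\<lambda>n. pr n m)" "le k y"
      using compactsD[of k "range (\<lambda>n. pr n m)" "q m"] k(1) chain_dir[OF m(2)] q_lub[OF m(2)] by blast
    then show thesis using that by blast
  qed
  define l where "l = h (n, pr n m)"
  have lS: "l \<in> \<Sigma>" unfolding l_def \<Sigma>_def S0_def using m(2) by blast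
  have "le (pr n m) (dl R l)" using main[of n] m(2) unfolding l_def by blast
  then have "le k (dl R l)" using trans[OF _ prD[OF m(2)] dlD' n] k(1) compacts_sub by blast
  then have "dl R l \<in> up D le (U \<inter> K)" using k(1) dlD' by (intro upI) auto
  then have "dl R l \<in> U" using eqU by simp
  then have "bracket D \<iota> (lts \<Sigma> R) l \<in> U" using bracket_lts[OF wf imf lS] by simp
  then show ?thesis using wf lS imf by blast
qed

end

theorem proposition3p14:
  fixes D :: "'d set" and le :: "'d \<Rightarrow> 'd \<Rightarrow> bool"
    and \<iota> :: "'d \<Rightarrow> ('act::finite \<Rightarrow> 'd set \<times> 'd set)"
  assumes "initial_solution D le \<iota>"
    and "infinite (UNIV :: 's set)"
  defines "LTSs \<equiv> {bracket D \<iota> (lts \<Sigma> R) l | (\<Sigma> :: 's set) R l.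
                       lts_wf \<Sigma> R \<and> l \<in> \<Sigma> \<and> image_finite (lts \<Sigma> R)}"
  shows "LTSs \<subseteq> maximals D le \<and>
         (\<forall>U. scott_open D le U \<and> U \<inter> maximals D le \<noteq> {} \<longrightarrow> U \<inter> maximals D le \<inter> LTSs \<noteq> {})"
proof -
  interpret I: isol D le \<iota> by (rule isol.intro[OF assms(1)])
  have part1: "LTSs \<subseteq> maximals D le"
  proof
    fix x assume "x \<in> LTSs"
    then obtain \<Sigma> :: "'s set" and R l where x: "x = bracket D \<iota> (lts \<Sigma> R) l" "lts_wf \<Sigma> R" "l \<in> \<Sigma>"
      "image_finite (lts \<Sigma> R)" unfolding LTSs_def by blast
    show "x \<in> maximals D le" unfolding x(1) by (rule I.bracket_max[OF x(2) x(4) x(3)])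
  qed
  have part2: "U \<inter> maximals D le \<inter> LTSs \<noteq> {}" if U: "scott_open D le U" "U \<inter> maximals D le \<noteq> {}" for U
  proof -
    obtain m where m: "m \<in> U" "m \<in> maximals D le" using U(2) by blast
    have mD: "m \<in> D" using m(2) unfolding maximals_def by blast
    obtain \<Sigma> :: "'s set" and R l where r: "lts_wf \<Sigma> R" "l \<in> \<Sigma>" "image_finite (lts \<Sigma> R)"
      "bracket D \<iota> (lts \<Sigma> R) l \<in> U"
      using I.density[OF assms(2) U(1) m(1) mD] by blast
    have "bracket D \<iota> (lts \<Sigma> R) l \<in> LTSs" unfolding LTSs_def using r by blast
    moreover have "bracket D \<iota> (lts \<Sigma> R) l \<in> maximals D le" using I.bracket_max[OF r(1) r(3) r(2)] .
    ultimately show ?thesis using r(4) by blast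
  qed
  show ?thesis using part1 part2 by blast
qed

end
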